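(* Let $n\ge1$, $T\ge2$, $G=([T],\mathcal{E})$ a connected undirected graph with incidence matrix $D$ (any orientation), Laplacian $L=D^\top D$ with eigenvalues $\lambda_1\ge\cdots\ge\lambda_{T-1}>\lambda_T=0$, and $M=D\otimes I_n$. Let $C_t\in\mathbb{R}^{m_t\times n}$, $C=\mathrm{blockdiag}(C_1,\dots,C_T)$, $O_T^\top O_T=\sum_t C_t^\top C_t$ with $\lambda_{\min}(O_T^\top O_T)>0$, and let $x\in\mathbb{R}^{nT}$ satisfy $\|Mx\|_2^2\le S_T$. Let $b_1,b_2,b_3>0$ satisfy $\lambda_{T-1}\ge b_1$, $\lambda_{\min}(O_T^\top O_T)/T\ge b_2$, $2\|C\|_2\lambda_{\max}^{1/2}(O_T^\top O_T)/\sqrt T\le b_3$, and for $\mu>0$ define $\overline{\lambda}(\mu)=\max\{\overline{\lambda'}(\mu),\lambda_{\min}(C^\top C)\}$ with $$\overline{\lambda'}(\mu)=\begin{cases}\dfrac{b_2^2}{2(b_2^2+b_3^2)}\mu b_1, & \text{if } \mu b_1<b_2+\dfrac{b_3^2-b_2^2}{2b_2},\\[2mm] \dfrac14\Big(1-\dfrac{\mu b_1-b_2}{\sqrt{b_3^2+(\mu b_1-b_2)^2}}\Big)\mu b_1+\dfrac{b_2}{4}+\dfrac{b_2(\mu b_1-b_2)-b_3^2}{4\sqrt{b_3^2+(\mu b_1-b_2)^2}}, & \text{otherwise.}\end{cases}$$ Then for any $\mu>0$, $$E_1:=2\mu^2\big\|(\mu M^\top M+C^\top C)^{-1}(M^\top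 M)x\big\|_2^2\le\frac{4\mu}{\overline{\lambda}(\mu)}S_T.$$
   Context: $\otimes$ is the Kronecker product; $\lambda_{\min},\lambda_{\max}$ denote smallest/largest eigenvalues; $\|\cdot\|_2$ is the Euclidean norm for vectors and spectral norm for matrices. *)

theory Defs
  imports "Jordan_Normal_Form.Matrix" "Jordan_Normal_Form.Char_Poly"
          "HOL-Library.Multiset"
begin

definition vnorm :: "real vec \<Rightarrow> real" where
  "vnorm v = sqrt (v \<bullet> v)"

definition spec_norm :: "real mat \<Rightarrow> real" where
  "spec_norm A = Sup {vnorm (A *\<^sub>v v) | v. v \<in> carrier_vec (dim_col A) \<and> vnorm v = 1}"

definition minv :: "real mat \<Rightarrow> real mat" where
  "minv A = (SOME B. inverts_mat A B \<and> inverts_mat B A)"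

definition lam_min :: "real mat \<Rightarrow> real" where
  "lam_min A = Min {k. eigenvalue A k}"
definition lam_max :: "real mat \<Rightarrow> real" where
  "lam_max A = Max {k. eigenvalue A k}"

definition eig_mset :: "real mat \<Rightarrow> real multiset" where
  "eig_mset A = (\<Sum>k\<in>{k. poly (char_poly A) k = 0}. replicate_mset (order k (char_poly A)) k)"

(* i-th eigenvalue in non-increasing order, 1-based: lambda_1 >= ... >= lambda_T *)
definition eig_desc :: "real mat \<Rightarrow> nat \<Rightarrow> real" where
  "eig_desc A i = rev (sorted_list_of_multiset (eig_mset A)) ! (i - 1)"

definition kron :: "real mat \<Rightarrow> real mat \<Rightarrow> real mat" where
  "kron A B = mat (dim_row A * dim_row B) (dim_col A * dim_col B)
     (\<lambda>(i,j). A $$ (i div dim_row B, j div dim_col B) * B $$ (i mod dim_row B, j mod dim_col B))"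

fun blockdiag :: "real mat list \<Rightarrow> real mat" where
  "blockdiag [] = 0\<^sub>m 0 0"
| "blockdiag (A # As) = (let B = blockdiag As in
     four_block_mat A (0\<^sub>m (dim_row A) (dim_col B)) (0\<^sub>m (dim_row B) (dim_col A)) B)"

(* simple undirected graph on vertices {0..<T}, given by a list of oriented edges *)
definition simple_graph :: "nat \<Rightarrow> (nat \<times> nat) list \<Rightarrow> bool" where
  "simple_graph T es \<longleftrightarrow> (\<forall>(i,j)\<in>set es. i < T \<and> j < T \<and> i \<noteq> j)
     \<and> distinct (map (\<lambda>(i,j). {i,j}) es)"

definition connected_graph :: "nat \<Rightarrow> (nat \<times> nat) list \<Rightarrow> bool" where
  "connected_graph T es \<longleftrightarrow> simple_graph T es \<and>
     (\<forall>u<T. \<forall>v<T. (u,v) \<in> ({(i,j). (i,j) \<in> set es \<or> (j,i) \<in> set es})\<^sup>*)"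

definition incidence :: "nat \<Rightarrow> (nat \<times> nat) list \<Rightarrow> real mat" where
  "incidence T es = mat (length es) T
     (\<lambda>(k,v). if v = fst (es ! k) then 1 else if v = snd (es ! k) then -1 else 0)"

definition lam_bar' :: "real \<Rightarrow> real \<Rightarrow> real \<Rightarrow> real \<Rightarrow> real" where
  "lam_bar' b1 b2 b3 \<mu> =
    (if \<mu> * b1 < b2 + (b3^2 - b2^2) / (2 * b2)
     then b2^2 / (2 * (b2^2 + b3^2)) * \<mu> * b1
     else 1/4 * (1 - (\<mu> * b1 - b2) / sqrt (b3^2 + (\<mu> * b1 - b2)^2)) * \<mu> * b1 + b2 / 4
          + (b2 * (\<mu> * b1 - b2) - b3^2) / (4 * sqrt (b3^2 + (\<mu> * b1 - b2)^2)))"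

end

theory Submission
  imports Defs
begin

lemma quad_disc:
  fixes a b c :: real
  assumes a: "a \<ge> 0" and f: "\<And>t. 0 \<le> c + 2*b*t + a*t^2"
  shows "b^2 \<le> a*c"
proof (cases "a = 0")
  case True
  show ?thesis
  proof (rule ccontr)
    assume "\<not> ?thesis"
    hence b: "b \<noteq> 0" using True by auto
    have "0 \<le> c + 2*b*(-(c+1)/(2*b)) + a*(-(c+1)/(2*b))^2" by (rule f)
    also have "\<dots> = -1" using b True by (simp add: field_simps)
    finally show False by simp
  qed
next
  case False
  hence a: "a > 0" using a by auto
  have "0 \<le> c + 2*b*(-b/a) + a*(-b/a)^2" by (rule f)
  also have "\<dots> = c - b^2/a" using a by (simp add: field_simps power2_eq_square)
  finally have "b^2/a \<le> c" by simp
  thus ?thesis using a by (simp add: field_simps mult.commute)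
qed

lemma sprod_carrier_sum: "w \<in> carrier_vec N \<Longrightarrow> v \<bullet> w = (\<Sum>i<N. v $ i * w $ i)"
  unfolding scalar_prod_def by (auto intro: sum.cong)

lemma sprod_self_nonneg: "0 \<le> (v :: real vec) \<bullet> v"
  unfolding scalar_prod_def by (auto intro: sum_nonneg)

lemma sprod_self_eq0: "v \<in> carrier_vec N \<Longrightarrow> ((v :: real vec) \<bullet> v = 0) = (v = 0\<^sub>v N)"
proof
  assume v: "v \<in> carrier_vec N" and "v \<bullet> v = 0"
  hence "(\<Sum>i\<in>{0..<N}. v $ i * v $ i) = 0" unfolding scalar_prod_def by auto
  hence "\<forall>i\<in>{0..<N}. v $ i * v $ i = 0" by (subst (asm) sum_nonneg_eq_0_iff) auto
  thus "v = 0\<^sub>v N" using v by (intro eq_vecI) auto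
qed auto

lemma sprod_sym_mat:
  fixes A :: "real mat"
  assumes A: "A \<in> carrier_mat N N" and s: "transpose_mat A = A"
    and x: "x \<in> carrier_vec N" and y: "y \<in> carrier_vec N"
  shows "x \<bullet> (A *\<^sub>v y) = y \<bullet> (A *\<^sub>v x)"
proof -
  have "(transpose_mat A *\<^sub>v x) \<bullet> y = x \<bullet> (A *\<^sub>v y)"
    by (rule transpose_vec_mult_scalar[OF A y x])
  hence "(A *\<^sub>v x) \<bullet> y = x \<bullet> (A *\<^sub>v y)" using s by simp
  moreover have "(A *\<^sub>v x) \<bullet> y = y \<bullet> (A *\<^sub>v x)"
    by (rule comm_scalar_prod[of _ N], insert A x y, auto)
  ultimately show ?thesis by simp
qed

lemma psd_cs:
  fixes B :: "real mat"
  assumes B: "B \<in> carrier_mat N N" and s: "transpose_mat B = B"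
    and x: "x \<in> carrier_vec N" and y: "y \<in> carrier_vec N"
    and psd: "\<And>t. 0 \<le> (y + t \<cdot>\<^sub>v x) \<bullet> (B *\<^sub>v (y + t \<cdot>\<^sub>v x))"
    and px: "0 \<le> x \<bullet> (B *\<^sub>v x)"
  shows "(y \<bullet> (B *\<^sub>v x))^2 \<le> (x \<bullet> (B *\<^sub>v x)) * (y \<bullet> (B *\<^sub>v y))"
proof (rule quad_disc[OF px])
  fix t
  have e: "(y + t \<cdot>\<^sub>v x) \<bullet> (B *\<^sub>v (y + t \<cdot>\<^sub>v x)) =
     y \<bullet> (B *\<^sub>v y) + 2 * (y \<bullet> (B *\<^sub>v x)) * t + (x \<bullet> (B *\<^sub>v x)) * t^2"
  proof -
    have sym: "x \<bullet> (B *\<^sub>v y) = y \<bullet> (B *\<^sub>v x)" by (rule sprod_sym_mat[OF B s x y])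
    have "B *\<^sub>v (y + t \<cdot>\<^sub>v x) = B *\<^sub>v y + t \<cdot>\<^sub>v (B *\<^sub>v x)"
      using B x y by (simp add: mult_add_distrib_mat_vec mult_mat_vec)
    hence "(y + t \<cdot>\<^sub>v x) \<bullet> (B *\<^sub>v (y + t \<cdot>\<^sub>v x)) = (y + t \<cdot>\<^sub>v x) \<bullet> (B *\<^sub>v y + t \<cdot>\<^sub>v (B *\<^sub>v x))"
      by simp
    also have "\<dots> = y \<bullet> (B *\<^sub>v y) + t * (y \<bullet> (B *\<^sub>v x)) + t * (x \<bullet> (B *\<^sub>v y)) + t * t * (x \<bullet> (B *\<^sub>v x))"
      using B x y by (simp add: add_scalar_prod_distrib[of _ N] scalar_prod_add_distrib[of _ N] algebra_simps)
    finally show ?thesis using sym by (simp add: power2_eq_square algebra_simps)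
  qed
  show "0 \<le> y \<bullet> (B *\<^sub>v y) + 2 * (y \<bullet> (B *\<^sub>v x)) * t + (x \<bullet> (B *\<^sub>v x)) * t^2"
    using psd[of t] e by simp
qed

lemma sum_cs:
  fixes a b :: "nat \<Rightarrow> real"
  shows "(\<Sum>j\<in>J. a j * b j)^2 \<le> (\<Sum>j\<in>J. (a j)^2) * (\<Sum>j\<in>J. (b j)^2)"
proof (rule quad_disc)
  show "0 \<le> (\<Sum>j\<in>J. (a j)^2)" by (auto intro: sum_nonneg)
  fix t
  have "0 \<le> (\<Sum>j\<in>J. (b j + t * a j)^2)" by (auto intro: sum_nonneg)
  also have "\<dots> = (\<Sum>j\<in>J. (b j)^2) + 2 * (\<Sum>j\<in>J. a j * b j) * t + (\<Sum>j\<in>J. (a j)^2) * t^2"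
    by (simp add: power2_eq_square algebra_simps sum.distrib sum_distrib_left sum_distrib_right)
  finally show "0 \<le> (\<Sum>j\<in>J. (b j)^2) + 2 * (\<Sum>j\<in>J. a j * b j) * t + (\<Sum>j\<in>J. (a j)^2) * t^2" .
qed

lemma vec_cs:
  fixes v w :: "real vec"
  assumes "v \<in> carrier_vec N" "w \<in> carrier_vec N"
  shows "(v \<bullet> w)^2 \<le> (v \<bullet> v) * (w \<bullet> w)"
  using sum_cs[where a="\<lambda>i. v $ i" and b="\<lambda>i. w $ i" and J="{..<N}"] assms
  by (simp add: sprod_carrier_sum[of _ N] power2_eq_square)

definition frob :: "real mat \<Rightarrow> real" where
  "frob A = (\<Sum>i<dim_row A. \<Sum>j<dim_col A. (A $$ (i,j))^2)"

lemma row_sprod_sum: "A \<in> carrier_mat r c \<Longrightarrow> i < r \<Longrightarrow> v \<in> carrier_vec c \<Longrightarrow>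
   (A *\<^sub>v v) $ i = (\<Sum>j<c. A $$ (i,j) * v $ j)"
  by (simp add: sprod_carrier_sum[of _ c] row_def)

lemma mat_vec_bound:
  fixes A :: "real mat"
  assumes A: "A \<in> carrier_mat r c" and v: "v \<in> carrier_vec c"
  shows "(A *\<^sub>v v) \<bullet> (A *\<^sub>v v) \<le> frob A * (v \<bullet> v)"
proof -
  have "(A *\<^sub>v v) \<bullet> (A *\<^sub>v v) = (\<Sum>i<r. ((A *\<^sub>v v) $ i)^2)"
    by (subst sprod_carrier_sum[of _ r], insert A v, auto simp: power2_eq_square)
  also have "\<dots> = (\<Sum>i<r. (\<Sum>j<c. A $$ (i,j) * v $ j)^2)"
    using A v row_sprod_sum[OF A _ v] by (intro sum.cong) auto
  also have "\<dots> \<le> (\<Sum>i<r. (\<Sum>j<c. (A $$ (i,j))^2) * (\<Sum>j<c. (v $ j)^2))"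
    by (intro sum_mono sum_cs)
  also have "\<dots> = frob A * (v \<bullet> v)"
    using A v by (simp add: frob_def sum_distrib_right sprod_carrier_sum[of _ c] power2_eq_square)
  finally show ?thesis .
qed

lemma frob_nonneg: "0 \<le> frob A"
  unfolding frob_def by (auto intro!: sum_nonneg)

lemma quad_bound:
  fixes A :: "real mat"
  assumes A: "A \<in> carrier_mat N N" and v: "v \<in> carrier_vec N"
  shows "\<bar>v \<bullet> (A *\<^sub>v v)\<bar> \<le> sqrt (frob A) * (v \<bullet> v)"
proof -
  have "(v \<bullet> (A *\<^sub>v v))^2 \<le> (v \<bullet> v) * ((A *\<^sub>v v) \<bullet> (A *\<^sub>v v))"
    by (rule vec_cs[of _ N], insert A v, auto)
  also have "\<dots> \<le> (v \<bullet> v) * (frob A * (v \<bullet> v))"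
    by (intro mult_left_mono mat_vec_bound[OF A v] sprod_self_nonneg)
  also have "\<dots> = (sqrt (frob A) * (v \<bullet> v))^2"
    using frob_nonneg[of A] by (simp add: power2_eq_square)
  finally show ?thesis
    using frob_nonneg[of A] sprod_self_nonneg[of v] by (metis abs_le_square_iff abs_of_nonneg mult_nonneg_nonneg real_sqrt_ge_zero)
qed

definition shiftm :: "nat \<Rightarrow> real mat \<Rightarrow> real \<Rightarrow> real \<Rightarrow> real vec \<Rightarrow> real mat" where
  "shiftm N A m c u = mat N N (\<lambda>(i,j). A $$ (i,j) - (if i = j then m else 0) + c * u $ i * u $ j)"

lemma shiftm_carrier[simp]: "shiftm N A m c u \<in> carrier_mat N N"
  unfolding shiftm_def by simp

lemma shiftm_mult:
  assumes A: "A \<in> carrier_mat N N" and u: "u \<in> carrier_vec N" and y: "y \<in> carrier_vec N"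
  shows "shiftm N A m c u *\<^sub>v y = A *\<^sub>v y - m \<cdot>\<^sub>v y + (c * (u \<bullet> y)) \<cdot>\<^sub>v u"
proof (rule eq_vecI)
  fix i assume "i < dim_vec (A *\<^sub>v y - m \<cdot>\<^sub>v y + (c * (u \<bullet> y)) \<cdot>\<^sub>v u)"
  hence i: "i < N" using A u by simp
  have dsum: "(\<Sum>j<N. (if i = j then m * y $ j else 0)) = m * y $ i" using i by simp
  have "(shiftm N A m c u *\<^sub>v y) $ i = (\<Sum>j<N. (A $$ (i,j) - (if i = j then m else 0) + c * u $ i * u $ j) * y $ j)"
    using i y by (simp add: shiftm_def sprod_carrier_sum[OF y])
  also have "\<dots> = (\<Sum>j<N. A $$ (i,j) * y $ j - (if i = j then m * y $ j else 0) + c * u $ i * (u $ j * y $ j))"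
    by (rule sum.cong) (auto simp: algebra_simps)
  also have "\<dots> = (\<Sum>j<N. A $$ (i,j) * y $ j) - (\<Sum>j<N. (if i = j then m * y $ j else 0)) + c * u $ i * (\<Sum>j<N. u $ j * y $ j)"
    by (simp add: sum.distrib sum_subtractf sum_distrib_left)
  also have "\<dots> = (A *\<^sub>v y - m \<cdot>\<^sub>v y + (c * (u \<bullet> y)) \<cdot>\<^sub>v u) $ i"
    using i A u y row_sprod_sum[OF A i y] by (simp add: dsum sprod_carrier_sum[OF y])
  finally show "(shiftm N A m c u *\<^sub>v y) $ i = (A *\<^sub>v y - m \<cdot>\<^sub>v y + (c * (u \<bullet> y)) \<cdot>\<^sub>v u) $ i" .
qed (insert A u, auto simp: shiftm_def)

lemma shiftm_sym:
  assumes A: "A \<in> carrier_mat N N" and s: "transpose_mat A = A"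
  shows "transpose_mat (shiftm N A m c u) = shiftm N A m c u"
proof (rule eq_matI)
  fix i j assume "i < dim_row (shiftm N A m c u)" "j < dim_col (shiftm N A m c u)"
  hence ij: "i < N" "j < N" by (auto simp: shiftm_def)
  have "A $$ (j,i) = A $$ (i,j)" using s ij A by (metis carrier_matD index_transpose_mat(1))
  thus "transpose_mat (shiftm N A m c u) $$ (i, j) = shiftm N A m c u $$ (i, j)"
    using ij by (auto simp: shiftm_def)
qed (auto simp: shiftm_def)

lemma zero_smult_vec: "u \<in> carrier_vec N \<Longrightarrow> (0::real) \<cdot>\<^sub>v u = 0\<^sub>v N"
  by (intro eq_vecI) auto

lemma inj_inverse:
  fixes A :: "real mat"
  assumes A: "A \<in> carrier_mat N N" and inj: "\<And>v. v \<in> carrier_vec N \<Longrightarrow> A *\<^sub>v v = 0\<^sub>v N \<Longrightarrow> v = 0\<^sub>v N"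
  shows "\<exists>B\<in>carrier_mat N N. B * A = 1\<^sub>m N \<and> A * B = 1\<^sub>m N"
proof -
  have "det A \<noteq> 0" using det_0_iff_vec_prod_zero[OF A] inj by auto
  from det_non_zero_imp_unit[OF A this, of undefined]
  show ?thesis unfolding Units_def by (auto simp: ring_mat_simps)
qed

lemma core:
  fixes A :: "real mat"
  assumes A: "A \<in> carrier_mat N N" and s: "transpose_mat A = A" and u: "u \<in> carrier_vec N"
    and Au: "A *\<^sub>v u = 0\<^sub>v N"
    and V: "\<exists>v\<in>carrier_vec N. u \<bullet> v = 0 \<and> v \<noteq> 0\<^sub>v N"
  shows "\<exists>m. (\<exists>w\<in>carrier_vec N. u \<bullet> w = 0 \<and> w \<noteq> 0\<^sub>v N \<and> A *\<^sub>v w = m \<cdot>\<^sub>v w)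
           \<and> (\<forall>v\<in>carrier_vec N. u \<bullet> v = 0 \<longrightarrow> m * (v \<bullet> v) \<le> v \<bullet> (A *\<^sub>v v))"
proof -
  define Q where "Q = {v \<bullet> (A *\<^sub>v v) | v. v \<in> carrier_vec N \<and> u \<bullet> v = 0 \<and> v \<bullet> v = 1}"
  define m where "m = Inf Q"
  define K where "K = sqrt (frob A)"
  have Kb: "\<And>v. v \<in> carrier_vec N \<Longrightarrow> \<bar>v \<bullet> (A *\<^sub>v v)\<bar> \<le> K * (v \<bullet> v)"
    unfolding K_def by (rule quad_bound[OF A])
  have norm: "\<exists>w. w \<in> carrier_vec N \<and> u \<bullet> w = 0 \<and> w \<bullet> w = 1 \<and> w \<bullet> (A *\<^sub>v w) = (v \<bullet> (A *\<^sub>v v)) / (v \<bullet> v)"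
    if v: "v \<in> carrier_vec N" "u \<bullet> v = 0" "v \<noteq> 0\<^sub>v N" for v
  proof -
    have pos: "v \<bullet> v > 0" using sprod_self_eq0[OF v(1)] sprod_self_nonneg[of v] v(3) by linarith
    define w where "w = (1 / sqrt (v \<bullet> v)) \<cdot>\<^sub>v v"
    have w: "w \<in> carrier_vec N" unfolding w_def using v by simp
    have "u \<bullet> w = 0" unfolding w_def using u v by simp
    moreover have "w \<bullet> w = 1" unfolding w_def using v pos by simp
    moreover have "w \<bullet> (A *\<^sub>v w) = (v \<bullet> (A *\<^sub>v v)) / (v \<bullet> v)"
      unfolding w_def using v pos A by (simp add: mult_mat_vec[OF A v(1)])
    ultimately show ?thesis using w by blast
  qed
  from V obtain v0 where v0: "v0 \<in> carrier_vec N" "u \<bullet> v0 = 0" "v0 \<noteq> 0\<^sub>v N" by auto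
  from norm[OF v0] have Qne: "Q \<noteq> {}" unfolding Q_def by blast
  have Qbdd: "bdd_below Q"
  proof
    fix q assume "q \<in> Q"
    then obtain v where v: "v \<in> carrier_vec N" "v \<bullet> v = 1" and q: "q = v \<bullet> (A *\<^sub>v v)"
      unfolding Q_def by auto
    show "- K \<le> q" using Kb[OF v(1)] v q by auto
  qed
  have lower: "\<forall>v\<in>carrier_vec N. u \<bullet> v = 0 \<longrightarrow> m * (v \<bullet> v) \<le> v \<bullet> (A *\<^sub>v v)"
  proof (intro ballI impI)
    fix v assume v: "v \<in> carrier_vec N" "u \<bullet> v = 0"
    show "m * (v \<bullet> v) \<le> v \<bullet> (A *\<^sub>v v)"
    proof (cases "v = 0\<^sub>v N")
      case True thus ?thesis using A by simp
    next
      case False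
      have pos: "v \<bullet> v > 0" using sprod_self_eq0[OF v(1)] sprod_self_nonneg[of v] False by linarith
      from norm[OF v False] obtain w where "w \<in> carrier_vec N" "u \<bullet> w = 0" "w \<bullet> w = 1"
        and w: "w \<bullet> (A *\<^sub>v w) = (v \<bullet> (A *\<^sub>v v)) / (v \<bullet> v)" by blast
      hence "(v \<bullet> (A *\<^sub>v v)) / (v \<bullet> v) \<in> Q" unfolding Q_def by (intro CollectI exI[of _ w]) auto
      hence "m \<le> (v \<bullet> (A *\<^sub>v v)) / (v \<bullet> v)" unfolding m_def by (rule cInf_lower[OF _ Qbdd])
      thus ?thesis using pos by (simp add: field_simps)
    qed
  qed
  have "\<exists>w\<in>carrier_vec N. u \<bullet> w = 0 \<and> w \<noteq> 0\<^sub>v N \<and> A *\<^sub>v w = m \<cdot>\<^sub>v w"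
  proof (rule ccontr)
    assume H: "\<not> ?thesis"
    define B where "B = shiftm N A m 0 u"
    define c where "c = (m + 1) / (u \<bullet> u)"
    define B' where "B' = shiftm N A m c u"
    have B: "B \<in> carrier_mat N N" and B': "B' \<in> carrier_mat N N" unfolding B_def B'_def by auto
    have sB: "transpose_mat B = B" unfolding B_def by (rule shiftm_sym[OF A s])
    have Bx: "B *\<^sub>v x = A *\<^sub>v x - m \<cdot>\<^sub>v x" if x: "x \<in> carrier_vec N" for x
    proof -
      have "0 \<cdot>\<^sub>v u = 0\<^sub>v N" using u by (intro eq_vecI) auto
      thus ?thesis unfolding B_def using shiftm_mult[OF A u x, of m 0] A x u by simp
    qed
    have B'x: "B' *\<^sub>v x = B *\<^sub>v x + (c * (u \<bullet> x)) \<cdot>\<^sub>v u" if x: "x \<in> carrier_vec N" for x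
      unfolding B'_def using shiftm_mult[OF A u x, of m c] Bx[OF x] by simp
    have qB: "x \<bullet> (B *\<^sub>v x) = x \<bullet> (A *\<^sub>v x) - m * (x \<bullet> x)" if x: "x \<in> carrier_vec N" for x
      using Bx[OF x] x A by (simp add: scalar_prod_minus_distrib[of _ N])
    have psdB: "0 \<le> x \<bullet> (B *\<^sub>v x)" if x: "x \<in> carrier_vec N" "u \<bullet> x = 0" for x
      using qB[OF x(1)] lower x by auto
    have uB: "u \<bullet> (B *\<^sub>v x) = - m * (u \<bullet> x)" if x: "x \<in> carrier_vec N" for x
    proof -
      have "u \<bullet> (B *\<^sub>v x) = x \<bullet> (B *\<^sub>v u)" by (rule sprod_sym_mat[OF B sB u x])
      also have "\<dots> = - m * (x \<bullet> u)" using Bx[OF u] Au x u by (simp add: scalar_prod_minus_distrib[of _ N])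
      also have "x \<bullet> u = u \<bullet> x" by (rule comm_scalar_prod[OF x u])
      finally show ?thesis .
    qed
    have injB: "x = 0\<^sub>v N" if x: "x \<in> carrier_vec N" "u \<bullet> x = 0" "B *\<^sub>v x = 0\<^sub>v N" for x
    proof -
      have "A *\<^sub>v x = m \<cdot>\<^sub>v x"
      proof -
        have "A *\<^sub>v x - m \<cdot>\<^sub>v x = 0\<^sub>v N" using Bx[OF x(1)] x(3) by simp
        note e = this
        show ?thesis
        proof (rule eq_vecI)
          fix i assume "i < dim_vec (m \<cdot>\<^sub>v x)"
          hence i: "i < N" using x by simp
          have "(A *\<^sub>v x - m \<cdot>\<^sub>v x) $ i = 0" using e i by simp
          thus "(A *\<^sub>v x) $ i = (m \<cdot>\<^sub>v x) $ i" using i A x by simp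
        qed (insert A x, simp)
      qed
      thus ?thesis using H x by blast
    qed
    have injB': "y = 0\<^sub>v N" if y: "y \<in> carrier_vec N" "B' *\<^sub>v y = 0\<^sub>v N" for y
    proof -
      have "0 = u \<bullet> (B' *\<^sub>v y)" using y u by simp
      also have "\<dots> = u \<bullet> (B *\<^sub>v y) + c * (u \<bullet> y) * (u \<bullet> u)"
        using B'x[OF y(1)] u y B by (simp add: scalar_prod_add_distrib[of _ N])
      also have "\<dots> = (u \<bullet> y) * (c * (u \<bullet> u) - m)" using uB[OF y(1)] by (simp add: algebra_simps)
      finally have eq: "(u \<bullet> y) * (c * (u \<bullet> u) - m) = 0" by simp
      have uy: "u \<bullet> y = 0"
      proof (cases "u = 0\<^sub>v N")
        case True thus ?thesis using y by simp
      next
        case False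
        hence "u \<bullet> u \<noteq> 0" using sprod_self_eq0[OF u] by simp
        hence "c * (u \<bullet> u) - m = 1" unfolding c_def by simp
        thus ?thesis using eq by simp
      qed
      have "B *\<^sub>v y = 0\<^sub>v N" using B'x[OF y(1)] uy y B by (simp add: zero_smult_vec[OF u])
      thus ?thesis using injB y uy by blast
    qed
    obtain Ni where Ni: "Ni \<in> carrier_mat N N" "Ni * B' = 1\<^sub>m N"
      using inj_inverse[OF B' injB'] by blast
    define F where "F = frob Ni"
    define KB where "KB = sqrt (frob B)"
    have F0: "F \<ge> 0" unfolding F_def by (rule frob_nonneg)
    have KB0: "KB \<ge> 0" unfolding KB_def by (simp add: frob_nonneg)
    have key: "x \<bullet> x \<le> (F * KB) * (x \<bullet> (B *\<^sub>v x))" if x: "x \<in> carrier_vec N" "u \<bullet> x = 0" for x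
    proof -
      have Bxc: "B *\<^sub>v x \<in> carrier_vec N" using B x by simp
      have "x = Ni *\<^sub>v (B' *\<^sub>v x)" using Ni B' x by (simp add: assoc_mult_mat_vec[symmetric, of _ N N _ N])
      also have "B' *\<^sub>v x = B *\<^sub>v x" using B'x[OF x(1)] x B by (simp add: zero_smult_vec[OF u])
      finally have xe: "x = Ni *\<^sub>v (B *\<^sub>v x)" .
      have 1: "x \<bullet> x \<le> F * ((B *\<^sub>v x) \<bullet> (B *\<^sub>v x))"
        unfolding F_def by (subst (1 2) xe, rule mat_vec_bound[OF Ni(1) Bxc])
      have uBx: "u \<bullet> (B *\<^sub>v x) = 0" using uB[OF x(1)] x by simp
      have cs: "((B *\<^sub>v x) \<bullet> (B *\<^sub>v x))^2 \<le> (x \<bullet> (B *\<^sub>v x)) * ((B *\<^sub>v x) \<bullet> (B *\<^sub>v (B *\<^sub>v x)))"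
      proof (rule psd_cs[OF B sB x(1) Bxc])
        fix t
        show "0 \<le> (B *\<^sub>v x + t \<cdot>\<^sub>v x) \<bullet> (B *\<^sub>v (B *\<^sub>v x + t \<cdot>\<^sub>v x))"
          by (rule psdB, insert Bxc x u uBx, auto simp: scalar_prod_add_distrib[of _ N])
      qed (rule psdB[OF x])
      have 2: "(B *\<^sub>v x) \<bullet> (B *\<^sub>v (B *\<^sub>v x)) \<le> KB * ((B *\<^sub>v x) \<bullet> (B *\<^sub>v x))"
        using quad_bound[OF B Bxc] unfolding KB_def by simp
      have 3: "(B *\<^sub>v x) \<bullet> (B *\<^sub>v x) \<le> KB * (x \<bullet> (B *\<^sub>v x))"
      proof (cases "(B *\<^sub>v x) \<bullet> (B *\<^sub>v x) = 0")
        case True thus ?thesis using KB0 psdB[OF x] by simp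
      next
        case False
        hence pos: "(B *\<^sub>v x) \<bullet> (B *\<^sub>v x) > 0" using sprod_self_nonneg[of "B *\<^sub>v x"] by linarith
        have "((B *\<^sub>v x) \<bullet> (B *\<^sub>v x))^2 \<le> (x \<bullet> (B *\<^sub>v x)) * (KB * ((B *\<^sub>v x) \<bullet> (B *\<^sub>v x)))"
          using cs 2 psdB[OF x] by (meson mult_left_mono order_trans)
        thus ?thesis using pos by (simp add: power2_eq_square algebra_simps)
      qed
      have "F * ((B *\<^sub>v x) \<bullet> (B *\<^sub>v x)) \<le> F * (KB * (x \<bullet> (B *\<^sub>v x)))"
        by (rule mult_left_mono[OF 3 F0])
      thus ?thesis using 1 by (simp add: mult.assoc)
    qed
    define \<delta> where "\<delta> = 1 / (F * KB + 1)"
    have FK: "F * KB + 1 > 0" using F0 KB0 by (simp add: add_nonneg_pos)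
    have d0: "\<delta> > 0" unfolding \<delta>_def using FK by simp
    have "m + \<delta> \<le> m"
      unfolding m_def
    proof (rule cInf_greatest[OF Qne])
      fix q assume "q \<in> Q"
      then obtain v where v: "v \<in> carrier_vec N" "u \<bullet> v = 0" "v \<bullet> v = 1" and q: "q = v \<bullet> (A *\<^sub>v v)"
        unfolding Q_def by auto
      have "1 \<le> (F * KB + 1) * (v \<bullet> (B *\<^sub>v v))" using key[OF v(1,2)] v(3) psdB[OF v(1,2)]
        by (simp add: algebra_simps)
      hence "\<delta> \<le> v \<bullet> (B *\<^sub>v v)" unfolding \<delta>_def using FK by (simp add: field_simps)
      thus "Inf Q + \<delta> \<le> q" using qB[OF v(1)] v(3) q unfolding m_def by simp
    qed
    thus False using d0 by simp
  qed
  thus ?thesis using lower by blast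
qed

lemma eig_finite:
  fixes A :: "real mat"
  assumes A: "A \<in> carrier_mat N N"
  shows "finite {k. eigenvalue A k}"
proof -
  have "char_poly A \<noteq> 0" using degree_monic_char_poly[OF A] by auto
  hence "finite {k. poly (char_poly A) k = 0}" by (rule poly_roots_finite)
  thus ?thesis using eigenvalue_root_char_poly[OF A] by simp
qed

lemma eigvec_rayleigh:
  fixes A :: "real mat"
  assumes A: "A \<in> carrier_mat N N" and ev: "eigenvector A v k"
  shows "v \<in> carrier_vec N" "v \<bullet> v > 0" "v \<bullet> (A *\<^sub>v v) = k * (v \<bullet> v)"
proof -
  from ev A show v: "v \<in> carrier_vec N" unfolding eigenvector_def by auto
  from ev A have "v \<noteq> 0\<^sub>v N" unfolding eigenvector_def by auto
  thus "v \<bullet> v > 0" using sprod_self_eq0[OF v] sprod_self_nonneg[of v] by linarith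
  from ev A have "A *\<^sub>v v = k \<cdot>\<^sub>v v" unfolding eigenvector_def by auto
  thus "v \<bullet> (A *\<^sub>v v) = k * (v \<bullet> v)" using v by simp
qed

lemma unit_exists: assumes N: "0 < N" shows "\<exists>v\<in>carrier_vec N. (0\<^sub>v N :: real vec) \<bullet> v = 0 \<and> v \<noteq> 0\<^sub>v N"
proof (intro bexI[of _ "unit_vec N 0"] conjI)
  have "unit_vec N 0 $ 0 \<noteq> (0\<^sub>v N :: real vec) $ 0" using N by simp
  thus "unit_vec N 0 \<noteq> (0\<^sub>v N :: real vec)" by metis
qed auto

lemma mat_zero_vec: "A \<in> carrier_mat N N \<Longrightarrow> (A :: real mat) *\<^sub>v 0\<^sub>v N = 0\<^sub>v N"
  by (intro eq_vecI) (auto simp: sprod_carrier_sum[of _ N])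

lemma lam_min_rayleigh:
  fixes A :: "real mat"
  assumes A: "A \<in> carrier_mat N N" and s: "transpose_mat A = A" and N: "0 < N"
    and v: "v \<in> carrier_vec N"
  shows "lam_min A * (v \<bullet> v) \<le> v \<bullet> (A *\<^sub>v v)"
proof -
  from core[OF A s zero_carrier_vec mat_zero_vec[OF A] unit_exists[OF N]]
  obtain m where w: "\<exists>w\<in>carrier_vec N. 0\<^sub>v N \<bullet> w = 0 \<and> w \<noteq> 0\<^sub>v N \<and> A *\<^sub>v w = m \<cdot>\<^sub>v w"
    and low: "\<forall>v\<in>carrier_vec N. 0\<^sub>v N \<bullet> v = 0 \<longrightarrow> m * (v \<bullet> v) \<le> v \<bullet> (A *\<^sub>v v)" by blast
  have em: "eigenvalue A m" using w A unfolding eigenvalue_def eigenvector_def by auto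
  have ge: "m \<le> k" if "eigenvalue A k" for k
  proof -
    from that obtain x where ev: "eigenvector A x k" unfolding eigenvalue_def by auto
    note r = eigvec_rayleigh[OF A ev]
    have "m * (x \<bullet> x) \<le> k * (x \<bullet> x)" using low r by auto
    thus ?thesis using r(2) by simp
  qed
  have "lam_min A = m" unfolding lam_min_def
    by (rule Min_eqI[OF eig_finite[OF A]], insert ge em, auto)
  thus ?thesis using low v by auto
qed

lemma lam_max_rayleigh:
  fixes A :: "real mat"
  assumes A: "A \<in> carrier_mat N N" and s: "transpose_mat A = A" and N: "0 < N"
    and v: "v \<in> carrier_vec N"
  shows "v \<bullet> (A *\<^sub>v v) \<le> lam_max A * (v \<bullet> v)"
proof -
  have A': "- A \<in> carrier_mat N N" using A by simp
  have s': "transpose_mat (- A) = - A" using s by (simp add: transpose_uminus)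
  have mA: "(- A) *\<^sub>v x = - (A *\<^sub>v x)" if "x \<in> carrier_vec N" for x
    using that A by simp
  from core[OF A' s' zero_carrier_vec mat_zero_vec[OF A'] unit_exists[OF N]]
  obtain m where w: "\<exists>w\<in>carrier_vec N. 0\<^sub>v N \<bullet> w = 0 \<and> w \<noteq> 0\<^sub>v N \<and> (- A) *\<^sub>v w = m \<cdot>\<^sub>v w"
    and low: "\<forall>v\<in>carrier_vec N. 0\<^sub>v N \<bullet> v = 0 \<longrightarrow> m * (v \<bullet> v) \<le> v \<bullet> ((- A) *\<^sub>v v)" by blast
  from w obtain w where wc: "w \<in> carrier_vec N" "w \<noteq> 0\<^sub>v N" and we: "(- A) *\<^sub>v w = m \<cdot>\<^sub>v w" by auto
  have "A *\<^sub>v w = (- m) \<cdot>\<^sub>v w"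
  proof (rule eq_vecI)
    fix i assume "i < dim_vec ((- m) \<cdot>\<^sub>v w)"
    hence i: "i < N" using wc by simp
    have "((- A) *\<^sub>v w) $ i = (m \<cdot>\<^sub>v w) $ i" using we by simp
    thus "(A *\<^sub>v w) $ i = ((- m) \<cdot>\<^sub>v w) $ i" using i wc A mA[OF wc(1)] by simp
  qed (insert A wc, simp)
  hence em: "eigenvalue A (- m)" using wc A unfolding eigenvalue_def eigenvector_def by auto
  have low': "v \<bullet> (A *\<^sub>v v) \<le> (- m) * (v \<bullet> v)" if v: "v \<in> carrier_vec N" for v
  proof -
    have "m * (v \<bullet> v) \<le> v \<bullet> ((- A) *\<^sub>v v)" using low v by auto
    also have "\<dots> = - (v \<bullet> (A *\<^sub>v v))" using mA[OF v] v A by simp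
    finally show ?thesis by simp
  qed
  have ge: "k \<le> - m" if "eigenvalue A k" for k
  proof -
    from that obtain x where ev: "eigenvector A x k" unfolding eigenvalue_def by auto
    note r = eigvec_rayleigh[OF A ev]
    have "k * (x \<bullet> x) \<le> (- m) * (x \<bullet> x)" using low'[OF r(1)] r(3) by linarith
    thus ?thesis using r(2) by (metis mult_le_cancel_right_pos)
  qed
  have "lam_max A = - m" unfolding lam_max_def
    by (rule Max_eqI[OF eig_finite[OF A]], insert ge em, auto)
  thus ?thesis using low' v by auto
qed

lemma sym_complex_eig_real:
  fixes A :: "real mat"
  assumes A: "A \<in> carrier_mat N N" and s: "transpose_mat A = A"
    and z: "poly (map_poly complex_of_real (char_poly A)) z = 0"
  shows "Im z = 0"
proof -
  define AC where "AC = map_mat complex_of_real A"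
  have AC: "AC \<in> carrier_mat N N" unfolding AC_def using A by simp
  have "char_poly AC = map_poly of_real (char_poly A)"
    unfolding AC_def using of_real_hom.char_poly_hom[OF A] by simp
  hence "eigenvalue AC z" using z eigenvalue_root_char_poly[OF AC] by simp
  then obtain v where ev: "eigenvector AC v z" unfolding eigenvalue_def by auto
  hence v: "v \<in> carrier_vec N" and v0: "v \<noteq> 0\<^sub>v N" and Av: "AC *\<^sub>v v = z \<cdot>\<^sub>v v"
    unfolding eigenvector_def using AC by auto
  define s where "s = (\<Sum>i<N. cnj (v $ i) * (AC *\<^sub>v v) $ i)"
  define r where "r = (\<Sum>i<N. (cmod (v $ i))^2)"
  have s1: "s = z * complex_of_real r"
  proof -
    have "s = (\<Sum>i<N. z * (cnj (v $ i) * v $ i))" unfolding s_def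
      by (rule sum.cong, insert Av v, auto)
    also have "\<dots> = z * (\<Sum>i<N. cnj (v $ i) * v $ i)" by (simp add: sum_distrib_left)
    also have "(\<Sum>i<N. cnj (v $ i) * v $ i) = complex_of_real r" unfolding r_def of_real_sum
      by (rule sum.cong[OF refl], subst complex_norm_square, simp add: mult.commute)
    finally show ?thesis .
  qed
  have s2: "s = (\<Sum>i<N. \<Sum>j<N. cnj (v $ i) * complex_of_real (A $$ (i,j)) * v $ j)"
    unfolding s_def
  proof (rule sum.cong[OF refl])
    fix i assume i: "i \<in> {..<N}"
    have "(AC *\<^sub>v v) $ i = (\<Sum>j<N. AC $$ (i,j) * v $ j)"
      using AC i v by (auto simp: scalar_prod_def row_def intro!: sum.cong)
    also have "\<dots> = (\<Sum>j<N. complex_of_real (A $$ (i,j)) * v $ j)"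
      using A i unfolding AC_def by (intro sum.cong) auto
    finally show "cnj (v $ i) * (AC *\<^sub>v v) $ i = (\<Sum>j<N. cnj (v $ i) * complex_of_real (A $$ (i,j)) * v $ j)"
      by (simp add: sum_distrib_left mult.assoc)
  qed
  have Asym: "A $$ (j,i) = A $$ (i,j)" if "i < N" "j < N" for i j
    using s that A by (metis carrier_matD index_transpose_mat(1))
  have "cnj s = (\<Sum>i<N. \<Sum>j<N. v $ i * complex_of_real (A $$ (i,j)) * cnj (v $ j))"
    unfolding s2 by (simp add: cnj_sum)
  also have "\<dots> = (\<Sum>j<N. \<Sum>i<N. v $ i * complex_of_real (A $$ (i,j)) * cnj (v $ j))"
    by (rule sum.swap)
  also have "\<dots> = s" unfolding s2
    by (intro sum.cong refl, insert Asym, auto simp: ac_simps)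
  finally have "cnj s = s" .
  hence Ims: "Im s = 0" by (metis complex_cnj_cancel_iff complex_cnj_zero_iff Reals_cnj_iff complex_is_Real_iff)
  have "r > 0"
  proof -
    have "r \<ge> 0" unfolding r_def by (auto intro: sum_nonneg)
    moreover have "r \<noteq> 0"
    proof
      assume "r = 0"
      hence "\<forall>i\<in>{..<N}. (cmod (v $ i))^2 = 0" unfolding r_def by (subst (asm) sum_nonneg_eq_0_iff) auto
      hence "v = 0\<^sub>v N" using v by (intro eq_vecI) auto
      thus False using v0 by simp
    qed
    ultimately show ?thesis by simp
  qed
  moreover have "Im s = Im z * r" unfolding s1 by simp
  ultimately show ?thesis using Ims by simp
qed

lemma real_split:
  fixes p :: "real poly"
  assumes mon: "coeff p (degree p) = 1"
    and allreal: "\<And>z. poly (map_poly complex_of_real p) z = 0 \<Longrightarrow> Im z = 0"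
  shows "\<exists>rs. p = (\<Prod>r\<leftarrow>rs. [:- r, 1:]) \<and> length rs = degree p"
proof -
  interpret h: map_poly_inj_idom_hom "complex_of_real" ..
  define pC where "pC = map_poly complex_of_real p"
  have dC: "degree pC = degree p" unfolding pC_def by simp
  have cC: "coeff pC (degree pC) = 1" unfolding pC_def using mon by simp
  from fundamental_theorem_algebra_factorized[of pC] cC dC
  obtain as where pa: "(\<Prod>a\<leftarrow>as. [:- a, 1:]) = pC" and la: "length as = degree p" by auto
  have re: "Im a = 0" if a: "a \<in> set as" for a
  proof -
    have "poly (\<Prod>a\<leftarrow>as. [:- a, 1:]) a = 0" using a
      by (induct as, simp, force)
    hence "poly pC a = 0" using pa by simp
    thus "Im a = 0" using allreal unfolding pC_def by blast
  qed
  define rs where "rs = map Re as"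
  have lin: "map_poly complex_of_real [:- r, 1:] = [:- complex_of_real r, 1:]" for r
    by simp
  have "map_poly complex_of_real (\<Prod>r\<leftarrow>rs. [:- r, 1:]) = (\<Prod>a\<leftarrow>as. [:- a, 1:])"
    unfolding rs_def using re
  proof (induct as)
    case Nil show ?case by simp
  next
    case (Cons a as)
    have "Im a = 0" using Cons.prems by simp
    hence ea: "complex_of_real (Re a) = a" by (simp add: complex_eq_iff)
    have IH: "map_poly complex_of_real (\<Prod>r\<leftarrow>map Re as. [:- r, 1:]) = (\<Prod>a\<leftarrow>as. [:- a, 1:])"
      using Cons by simp
    have "map_poly complex_of_real (\<Prod>r\<leftarrow>map Re (a # as). [:- r, 1:])
       = map_poly complex_of_real [:- Re a, 1:] * map_poly complex_of_real (\<Prod>r\<leftarrow>map Re as. [:- r, 1:])"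
      by (simp only: list.map prod_list.Cons h.hom_mult)
    also have "\<dots> = [:- a, 1:] * (\<Prod>a\<leftarrow>as. [:- a, 1:])" by (simp only: lin ea IH)
    finally show ?case by simp
  qed
  hence "map_poly complex_of_real (\<Prod>r\<leftarrow>rs. [:- r, 1:]) = map_poly complex_of_real p"
    using pa unfolding pC_def by simp
  hence "p = (\<Prod>r\<leftarrow>rs. [:- r, 1:])" by (rule h.injectivity[symmetric])
  moreover have "length rs = degree p" using la unfolding rs_def by simp
  ultimately show ?thesis by blast
qed

lemma order_prod_lin:
  fixes rs :: "real list"
  shows "order k (\<Prod>r\<leftarrow>rs. [:- r, 1:]) = count (mset rs) k"
proof (induct rs)
  case Nil
  thus ?case by (simp add: order_0I)
next
  case (Cons r rs)
  have nz: "(\<Prod>r\<leftarrow>rs. [:- r, 1:]) \<noteq> 0"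
    using prod_list_zero_iff[of "map (\<lambda>r. [:- r, 1:]) rs"] by auto
  have "order k (\<Prod>r\<leftarrow>r # rs. [:- r, 1:]) = order k [:- r, 1:] + order k (\<Prod>r\<leftarrow>rs. [:- r, 1:])"
  proof -
    have "[:- r, 1:] * (\<Prod>r\<leftarrow>rs. [:- r, 1:]) \<noteq> 0"
      by (metis nz mult_eq_0_iff pCons_eq_0_iff one_neq_zero)
    thus ?thesis by (simp only: prod_list.Cons list.map, intro order_mult)
  qed
  moreover have "order k [:- r, 1:] = (if k = r then 1 else 0)"
  proof (cases "k = r")
    case True thus ?thesis using order_power_n_n[of r 1] by simp
  next
    case False
    have "poly [:- r, 1:] k \<noteq> 0" using False by simp
    hence "order k [:- r, 1:] = 0" by (rule order_0I)
    thus ?thesis using False by simp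
  qed
  ultimately show ?case using Cons by simp
qed

lemma sum_replicate_count:
  fixes M :: "'a multiset"
  shows "(\<Sum>k\<in>set_mset M. replicate_mset (count M k) k) = M"
proof (rule multiset_eqI)
  fix x
  have "count (\<Sum>k\<in>set_mset M. replicate_mset (count M k) k) x = (\<Sum>k\<in>set_mset M. if k = x then count M k else 0)"
    by (simp add: count_sum)
  also have "\<dots> = count M x" by (simp add: sum.delta' count_eq_zero_iff)
  finally show "count (\<Sum>k\<in>set_mset M. replicate_mset (count M k) k) x = count M x" .
qed

lemma eig_mset_split:
  fixes A :: "real mat"
  assumes "char_poly A = (\<Prod>r\<leftarrow>rs. [:- r, 1:])"
  shows "eig_mset A = mset rs"
proof -
  have pz: "poly (\<Prod>r\<leftarrow>rs. [:- r, 1:]) k = 0 \<longleftrightarrow> k \<in> set rs" for k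
  proof (induct rs)
    case Nil show ?case by simp
  next
    case (Cons a rs)
    have "poly (\<Prod>r\<leftarrow>a # rs. [:- r, 1:]) k = (k - a) * poly (\<Prod>r\<leftarrow>rs. [:- r, 1:]) k"
      by (simp add: algebra_simps)
    thus ?case using Cons by simp
  qed
  have roots: "{k. poly (char_poly A) k = 0} = set_mset (mset rs)"
    unfolding assms using pz by auto
  show ?thesis unfolding eig_mset_def roots unfolding assms order_prod_lin
    by (rule sum_replicate_count)
qed

lemma sym_eig_mset_size:
  fixes A :: "real mat"
  assumes A: "A \<in> carrier_mat N N" and s: "transpose_mat A = A"
  shows "size (eig_mset A) = N"
proof -
  from degree_monic_char_poly[OF A] have d: "degree (char_poly A) = N" "coeff (char_poly A) N = 1" by auto
  from real_split[of "char_poly A"] d sym_complex_eig_real[OF A s]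
  obtain rs where "char_poly A = (\<Prod>r\<leftarrow>rs. [:- r, 1:])" "length rs = N" by auto
  thus ?thesis using eig_mset_split by simp
qed

lemma eig_mset_mem:
  fixes A :: "real mat"
  assumes A: "A \<in> carrier_mat N N" and e: "eigenvalue A k"
  shows "k \<in># eig_mset A"
proof -
  have r: "poly (char_poly A) k = 0" using e eigenvalue_root_char_poly[OF A] by simp
  have nz: "char_poly A \<noteq> 0" using degree_monic_char_poly[OF A] by auto
  have fin: "finite {k. poly (char_poly A) k = 0}" by (rule poly_roots_finite[OF nz])
  have "order k (char_poly A) \<noteq> 0" using r nz order_root by blast
  have "eig_mset A = replicate_mset (order k (char_poly A)) k +
     (\<Sum>k'\<in>{k. poly (char_poly A) k = 0} - {k}. replicate_mset (order k' (char_poly A)) k')"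
    unfolding eig_mset_def by (rule sum.remove[OF fin], simp add: r)
  thus ?thesis using \<open>order k (char_poly A) \<noteq> 0\<close> by simp
qed

lemma second_le:
  fixes M :: "real multiset"
  assumes size: "size M = T" and T: "T \<ge> 2" and z: "0 \<in># M" and m: "m2 \<in># M" and pos: "0 < m2"
  shows "rev (sorted_list_of_multiset M) ! (T - 1 - 1) \<le> m2"
proof -
  define xs where "xs = sorted_list_of_multiset M"
  have "length xs = size (mset xs)" by simp
  hence len: "length xs = T" unfolding xs_def using size by simp
  have sxs: "sorted xs" unfolding xs_def by simp
  have "set xs = set_mset (mset xs)" by simp
  hence set: "set xs = set_mset M" unfolding xs_def by simp
  have "rev xs ! (T - 1 - 1) = xs ! 1" using len T by (simp add: rev_nth)
  moreover obtain j where j: "j < T" "xs ! j = m2" using m set len by (metis in_set_conv_nth)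
  moreover obtain j' where j': "j' < T" "xs ! j' = 0" using z set len by (metis in_set_conv_nth)
  moreover have "j \<ge> 1"
  proof (rule ccontr)
    assume "\<not> j \<ge> 1" hence "j = 0" by simp
    hence "xs ! 0 = m2" using j by simp
    moreover have "xs ! 0 \<le> xs ! j'" using sxs j' len by (intro sorted_nth_mono) auto
    ultimately show False using j' pos by simp
  qed
  ultimately have "xs ! 1 \<le> xs ! j" "rev xs ! (T - 1 - 1) = xs ! 1" "xs ! j = m2"
    using sxs len by (auto intro: sorted_nth_mono)
  thus ?thesis unfolding xs_def by simp
qed

lemma inc_carrier[simp]: "incidence T es \<in> carrier_mat (length es) T"
  unfolding incidence_def by simp

lemma inc_dims[simp]: "dim_row (incidence T es) = length es" "dim_col (incidence T es) = T"
  unfolding incidence_def by auto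

lemma inc_mult:
  assumes sg: "simple_graph T es" and y: "y \<in> carrier_vec T" and k: "k < length es"
  shows "(incidence T es *\<^sub>v y) $ k = y $ (fst (es ! k)) - y $ (snd (es ! k))"
proof -
  obtain a b where ab: "es ! k = (a, b)" by (cases "es ! k")
  have fs: "fst (es ! k) = a" "snd (es ! k) = b" using ab by auto
  have "(a,b) \<in> set es" using k ab by (metis nth_mem)
  hence a: "a < T" and b: "b < T" and abne: "a \<noteq> b" using sg unfolding simple_graph_def by auto
  have "(incidence T es *\<^sub>v y) $ k = (\<Sum>v<T. (if v = a then 1 else if v = b then -1 else 0) * y $ v)"
  proof -
    have "row (incidence T es) k = vec T (\<lambda>v. if v = a then 1 else if v = b then -1 else 0)"
      using k fs by (intro eq_vecI) (auto simp: incidence_def)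
    thus ?thesis using k y by (simp add: sprod_carrier_sum[OF y])
  qed
  also have "\<dots> = (\<Sum>v<T. (if v = a then y $ v else 0) - (if v = b then y $ v else 0))"
    using abne by (intro sum.cong) auto
  also have "\<dots> = y $ a - y $ b" using a b by (simp add: sum_subtractf)
  finally show ?thesis using ab by simp
qed

lemma gram_quad:
  fixes D :: "real mat"
  assumes D: "D \<in> carrier_mat r c" and y: "y \<in> carrier_vec c"
  shows "y \<bullet> ((transpose_mat D * D) *\<^sub>v y) = (D *\<^sub>v y) \<bullet> (D *\<^sub>v y)"
proof -
  have "(transpose_mat D * D) *\<^sub>v y = transpose_mat D *\<^sub>v (D *\<^sub>v y)"
    using D y by (simp add: assoc_mult_mat_vec[of _ c r _ c])
  moreover have "(transpose_mat D *\<^sub>v (D *\<^sub>v y)) \<bullet> y = (D *\<^sub>v y) \<bullet> (D *\<^sub>v y)"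
    by (rule transpose_vec_mult_scalar[OF D y], insert D y, simp)
  moreover have "y \<bullet> (transpose_mat D *\<^sub>v (D *\<^sub>v y)) = (transpose_mat D *\<^sub>v (D *\<^sub>v y)) \<bullet> y"
    by (rule comm_scalar_prod[of _ c], insert D y, auto)
  ultimately show ?thesis by simp
qed

lemma gram_sym: "transpose_mat (transpose_mat D * D) = transpose_mat D * (D :: real mat)"
  by (simp add: transpose_mult[of "transpose_mat D" "dim_col D" "dim_row D" D "dim_col D"])

lemma gram_carrier: "D \<in> carrier_mat r c \<Longrightarrow> transpose_mat D * D \<in> carrier_mat c c"
  by simp

definition ones :: "nat \<Rightarrow> real vec" where "ones T = vec T (\<lambda>_. 1)"

lemma ones_carrier[simp]: "ones T \<in> carrier_vec T" unfolding ones_def by simp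

lemma ones_sprod: "y \<in> carrier_vec T \<Longrightarrow> ones T \<bullet> y = (\<Sum>i<T. y $ i)"
  by (simp add: sprod_carrier_sum[of _ T] ones_def)

lemma inc_ones:
  assumes sg: "simple_graph T es"
  shows "incidence T es *\<^sub>v ones T = 0\<^sub>v (length es)"
proof (rule eq_vecI)
  fix k assume "k < dim_vec (0\<^sub>v (length es) :: real vec)"
  hence k: "k < length es" by simp
  obtain a b where ab: "es ! k = (a, b)" by (cases "es ! k")
  have "(a,b) \<in> set es" using k ab by (metis nth_mem)
  hence a: "a < T" and b: "b < T" using sg unfolding simple_graph_def by auto
  show "(incidence T es *\<^sub>v ones T) $ k = 0\<^sub>v (length es) $ k"
    using inc_mult[OF sg ones_carrier k] ab a b k by (simp add: ones_def)
qed (simp add: incidence_def)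

lemma mat_zero_vec_gen: "A \<in> carrier_mat r c \<Longrightarrow> (A :: real mat) *\<^sub>v 0\<^sub>v c = 0\<^sub>v r"
  by (intro eq_vecI) (auto simp: sprod_carrier_sum[of _ c])

lemma conn_const:
  assumes cg: "connected_graph T es" and y: "y \<in> carrier_vec T"
    and Dy: "incidence T es *\<^sub>v y = 0\<^sub>v (length es)" and u: "u < T"
  shows "y $ u = y $ 0"
proof -
  define R where "R = {(i,j). (i,j) \<in> set es \<or> (j,i) \<in> set es}"
  have sg: "simple_graph T es" using cg unfolding connected_graph_def by simp
  have T0: "0 < T" using u by simp
  have "(0, u) \<in> R\<^sup>*" using cg u T0 unfolding connected_graph_def R_def by blast
  thus ?thesis
  proof (induct rule: rtrancl_induct)
    case base show ?case by simp
  next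
    case (step a b)
    have edge: "y $ i = y $ j" if "(i,j) \<in> set es" for i j
    proof -
      from that obtain k where k: "k < length es" "es ! k = (i,j)" by (metis in_set_conv_nth)
      have "(incidence T es *\<^sub>v y) $ k = 0" using Dy k by simp
      thus ?thesis using inc_mult[OF sg y k(1)] k by simp
    qed
    from step(2) have "y $ a = y $ b" unfolding R_def using edge by auto
    thus ?case using step(3) by simp
  qed
qed

lemma lap_bound:
  assumes cg: "connected_graph T es" and T: "T \<ge> 2"
    and y: "y \<in> carrier_vec T" and ys: "(\<Sum>i<T. y $ i) = 0"
  shows "eig_desc (transpose_mat (incidence T es) * incidence T es) (T - 1) * (y \<bullet> y)
     \<le> (incidence T es *\<^sub>v y) \<bullet> (incidence T es *\<^sub>v y)"
proof -
  define D where "D = incidence T es"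
  define L where "L = transpose_mat D * D"
  have sg: "simple_graph T es" using cg unfolding connected_graph_def by simp
  have D: "D \<in> carrier_mat (length es) T" unfolding D_def by simp
  have L: "L \<in> carrier_mat T T" unfolding L_def using D by simp
  have sL: "transpose_mat L = L" unfolding L_def by (rule gram_sym)
  have D1: "D *\<^sub>v ones T = 0\<^sub>v (length es)" unfolding D_def by (rule inc_ones[OF sg])
  have L1: "L *\<^sub>v ones T = 0\<^sub>v T"
  proof -
    have "L *\<^sub>v ones T = transpose_mat D *\<^sub>v (D *\<^sub>v ones T)"
      unfolding L_def using D by (simp add: assoc_mult_mat_vec[of _ T "length es" _ T])
    also have "\<dots> = 0\<^sub>v T" unfolding D1 using D by (simp add: mat_zero_vec_gen)
    finally show ?thesis .
  qed
  define v0 where "v0 = vec T (\<lambda>i. if i = 0 then 1 else if i = 1 then -1 else (0::real))"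
  have V: "\<exists>v\<in>carrier_vec T. ones T \<bullet> v = 0 \<and> v \<noteq> 0\<^sub>v T"
  proof (intro bexI[of _ v0] conjI)
    show v0c: "v0 \<in> carrier_vec T" unfolding v0_def by simp
    have "ones T \<bullet> v0 = (\<Sum>i<T. v0 $ i)" by (rule ones_sprod[OF v0c])
    also have "\<dots> = (\<Sum>i<T. (if i = 0 then 1 else 0) - (if i = 1 then 1 else (0::real)))"
      unfolding v0_def by (intro sum.cong) auto
    also have "\<dots> = 0" using T by (simp add: sum_subtractf)
    finally show "ones T \<bullet> v0 = 0" .
    have "v0 $ 0 \<noteq> (0\<^sub>v T :: real vec) $ 0" using T unfolding v0_def by simp
    thus "v0 \<noteq> 0\<^sub>v T" by metis
  qed
  from core[OF L sL ones_carrier L1 V] obtain m2 where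
    w: "\<exists>w\<in>carrier_vec T. ones T \<bullet> w = 0 \<and> w \<noteq> 0\<^sub>v T \<and> L *\<^sub>v w = m2 \<cdot>\<^sub>v w"
    and low: "\<forall>v\<in>carrier_vec T. ones T \<bullet> v = 0 \<longrightarrow> m2 * (v \<bullet> v) \<le> v \<bullet> (L *\<^sub>v v)" by blast
  from w obtain w where wc: "w \<in> carrier_vec T" and w1: "ones T \<bullet> w = 0" and w0: "w \<noteq> 0\<^sub>v T"
    and Lw: "L *\<^sub>v w = m2 \<cdot>\<^sub>v w" by blast
  have m2pos: "m2 > 0"
  proof (rule ccontr)
    assume "\<not> m2 > 0"
    hence m2: "m2 \<le> 0" by simp
    have "w \<bullet> (L *\<^sub>v w) = m2 * (w \<bullet> w)" using Lw wc by simp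
    also have "\<dots> \<le> 0" using m2 sprod_self_nonneg[of w] by (simp add: mult_nonpos_nonneg)
    finally have "(D *\<^sub>v w) \<bullet> (D *\<^sub>v w) \<le> 0" using gram_quad[OF D wc] unfolding L_def by simp
    hence "(D *\<^sub>v w) \<bullet> (D *\<^sub>v w) = 0" using sprod_self_nonneg[of "D *\<^sub>v w"] by linarith
    hence Dw: "D *\<^sub>v w = 0\<^sub>v (length es)" using sprod_self_eq0[of "D *\<^sub>v w" "length es"] D wc by simp
    have const: "w $ u = w $ 0" if "u < T" for u
      by (rule conn_const[OF cg wc Dw[unfolded D_def] that])
    have "ones T \<bullet> w = (\<Sum>i<T. w $ i)" by (rule ones_sprod[OF wc])
    also have "\<dots> = (\<Sum>i<T. w $ 0)" by (rule sum.cong[OF refl], rule const, simp)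
    finally have "ones T \<bullet> w = (\<Sum>i<T. w $ 0)" .
    hence "real T * w $ 0 = 0" using w1 by simp
    hence "w $ 0 = 0" using T by simp
    hence "w = 0\<^sub>v T"
    proof (intro eq_vecI)
      fix i assume w00: "w $ 0 = 0" and "i < dim_vec (0\<^sub>v T :: real vec)"
      hence "i < T" by simp
      have "w $ i = w $ 0" using const[of i] \<open>i < T\<close> by blast
      thus "w $ i = 0\<^sub>v T $ i" using w00 \<open>i < T\<close> by simp
    qed (insert wc, simp)
    thus False using w0 by simp
  qed
  have ones0: "ones T \<noteq> 0\<^sub>v T"
  proof -
    have "ones T $ 0 \<noteq> (0\<^sub>v T :: real vec) $ 0" using T unfolding ones_def by simp
    thus ?thesis by metis
  qed
  have e0: "eigenvalue L 0" unfolding eigenvalue_def eigenvector_def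
    using L L1 ones0 zero_smult_vec[OF ones_carrier[of T]] by (intro exI[of _ "ones T"]) auto
  have em: "eigenvalue L m2" unfolding eigenvalue_def eigenvector_def
    using L Lw wc w0 by (intro exI[of _ w]) auto
  have "eig_desc L (T - 1) \<le> m2" unfolding eig_desc_def
    by (rule second_le[OF sym_eig_mset_size[OF L sL] T eig_mset_mem[OF L e0] eig_mset_mem[OF L em] m2pos])
  moreover have "m2 * (y \<bullet> y) \<le> y \<bullet> (L *\<^sub>v y)" using low y ys ones_sprod[OF y] by simp
  moreover have "y \<bullet> (L *\<^sub>v y) = (D *\<^sub>v y) \<bullet> (D *\<^sub>v y)" unfolding L_def by (rule gram_quad[OF D y])
  moreover have "eig_desc L (T - 1) * (y \<bullet> y) \<le> m2 * (y \<bullet> y)"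
    using calculation(1) sprod_self_nonneg[of y] by (rule mult_right_mono)
  ultimately have "eig_desc L (T - 1) * (y \<bullet> y) \<le> (D *\<^sub>v y) \<bullet> (D *\<^sub>v y)"
    by linarith
  thus ?thesis unfolding L_def D_def .
qed

lemma sum_add_split: fixes m k :: nat shows "(\<Sum>c<m+k. f c) = (\<Sum>c<m. f c) + (\<Sum>a<k. f (m + a :: nat) :: real)"
  by (induct k) (auto simp: add_ac)

lemma sum_blocks: fixes T n :: nat shows "(\<Sum>c<T*n. f c) = (\<Sum>v<T. \<Sum>a<n. f (v*n + a) :: real)"
proof (induct T)
  case (Suc T)
  have "(\<Sum>c<Suc T * n. f c) = (\<Sum>c<T * n + n. f c)" by (simp add: add.commute)
  also have "\<dots> = (\<Sum>c<T*n. f c) + (\<Sum>a<n. f (T*n + a))" by (rule sum_add_split)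
  finally show ?case using Suc by simp
qed simp

definition blk :: "real vec \<Rightarrow> nat \<Rightarrow> nat \<Rightarrow> nat \<Rightarrow> real vec" where
  "blk x n a T = vec T (\<lambda>v. x $ (v * n + a))"

definition tblk :: "real vec \<Rightarrow> nat \<Rightarrow> nat \<Rightarrow> real vec" where
  "tblk x n t = vec n (\<lambda>a. x $ (t * n + a))"

lemma blk_carrier[simp]: "blk x n a T \<in> carrier_vec T" unfolding blk_def by simp
lemma tblk_carrier[simp]: "tblk x n t \<in> carrier_vec n" unfolding tblk_def by simp

lemma sprod_blocks:
  assumes "x \<in> carrier_vec (n*T)" "y \<in> carrier_vec (n*T)"
  shows "x \<bullet> y = (\<Sum>a<n. blk x n a T \<bullet> blk y n a T)"
proof -
  have "x \<bullet> y = (\<Sum>c<T*n. x $ c * y $ c)" using assms by (simp add: sprod_carrier_sum[of _ "n*T"] mult.commute)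
  also have "\<dots> = (\<Sum>v<T. \<Sum>a<n. x $ (v*n+a) * y $ (v*n+a))" by (rule sum_blocks)
  also have "\<dots> = (\<Sum>a<n. \<Sum>v<T. x $ (v*n+a) * y $ (v*n+a))" by (rule sum.swap)
  also have "\<dots> = (\<Sum>a<n. blk x n a T \<bullet> blk y n a T)"
    by (simp add: blk_def sprod_carrier_sum[of _ T])
  finally show ?thesis .
qed

lemma kron_carrier: "D \<in> carrier_mat r T \<Longrightarrow> kron D (1\<^sub>m n) \<in> carrier_mat (r * n) (T * n)"
  unfolding kron_def by auto

lemma kron_mult:
  fixes D :: "real mat"
  assumes D: "D \<in> carrier_mat r T" and x: "x \<in> carrier_vec (n*T)" and k: "k < r" and a: "a < n"
  shows "(kron D (1\<^sub>m n) *\<^sub>v x) $ (k * n + a) = (D *\<^sub>v blk x n a T) $ k"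
proof -
  have n: "0 < n" using a by simp
  have r: "k * n + a < r * n"
  proof -
    have "k * n + a < k * n + n" using a by simp
    also have "\<dots> = Suc k * n" by simp
    also have "\<dots> \<le> r * n" using k by (intro mult_right_mono) auto
    finally show ?thesis .
  qed
  have x': "x \<in> carrier_vec (T*n)" using x by (simp add: mult.commute)
  have "(kron D (1\<^sub>m n) *\<^sub>v x) $ (k * n + a) = (\<Sum>c<T*n. kron D (1\<^sub>m n) $$ (k*n+a, c) * x $ c)"
    by (rule row_sprod_sum[OF kron_carrier[OF D] r x'])
  also have "\<dots> = (\<Sum>v<T. \<Sum>a'<n. kron D (1\<^sub>m n) $$ (k*n+a, v*n+a') * x $ (v*n+a'))"
    by (rule sum_blocks)
  also have "\<dots> = (\<Sum>v<T. \<Sum>a'<n. (if a' = a then D $$ (k, v) * x $ (v*n+a) else 0))"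
  proof (intro sum.cong refl)
    fix v a' assume v: "v \<in> {..<T}" and a': "a' \<in> {..<n}"
    have c: "v * n + a' < T * n"
    proof -
      have "v * n + a' < v * n + n" using a' by simp
      also have "\<dots> = Suc v * n" by simp
      also have "\<dots> \<le> T * n" using v by (intro mult_right_mono) auto
      finally show ?thesis .
    qed
    have d1: "(k*n+a) div n = k" "(k*n+a) mod n = a" using a by auto
    have d2: "(v*n+a') div n = v" "(v*n+a') mod n = a'" using a' by auto
    show "kron D (1\<^sub>m n) $$ (k*n+a, v*n+a') * x $ (v*n+a') = (if a' = a then D $$ (k, v) * x $ (v*n+a) else 0)"
      using r c D a a' unfolding kron_def by (auto simp: d1 d2)
  qed
  also have "\<dots> = (\<Sum>v<T. D $$ (k, v) * x $ (v*n+a))" using a by simp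
  also have "\<dots> = (D *\<^sub>v blk x n a T) $ k"
    using row_sprod_sum[OF D k blk_carrier[of x n a T]] by (simp add: blk_def)
  finally show ?thesis .
qed

lemma kron_norm:
  fixes D :: "real mat"
  assumes D: "D \<in> carrier_mat r T" and x: "x \<in> carrier_vec (n*T)"
  shows "(kron D (1\<^sub>m n) *\<^sub>v x) \<bullet> (kron D (1\<^sub>m n) *\<^sub>v x) = (\<Sum>a<n. (D *\<^sub>v blk x n a T) \<bullet> (D *\<^sub>v blk x n a T))"
proof -
  let ?M = "kron D (1\<^sub>m n)"
  have M: "?M \<in> carrier_mat (r*n) (T*n)" by (rule kron_carrier[OF D])
  have x': "x \<in> carrier_vec (T*n)" using x by (simp add: mult.commute)
  have "(?M *\<^sub>v x) \<bullet> (?M *\<^sub>v x) = (\<Sum>c<r*n. (?M *\<^sub>v x) $ c * (?M *\<^sub>v x) $ c)"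
    using M x' by (intro sprod_carrier_sum) auto
  also have "\<dots> = (\<Sum>k<r. \<Sum>a<n. (?M *\<^sub>v x) $ (k*n+a) * (?M *\<^sub>v x) $ (k*n+a))" by (rule sum_blocks)
  also have "\<dots> = (\<Sum>k<r. \<Sum>a<n. (D *\<^sub>v blk x n a T) $ k * (D *\<^sub>v blk x n a T) $ k)"
    using kron_mult[OF D x] by (intro sum.cong refl) auto
  also have "\<dots> = (\<Sum>a<n. \<Sum>k<r. (D *\<^sub>v blk x n a T) $ k * (D *\<^sub>v blk x n a T) $ k)" by (rule sum.swap)
  also have "\<dots> = (\<Sum>a<n. (D *\<^sub>v blk x n a T) \<bullet> (D *\<^sub>v blk x n a T))"
    using D by (intro sum.cong refl, subst sprod_carrier_sum[of _ r]) auto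
  finally show ?thesis .
qed

lemma zero_mat_mult_vec: "(v :: real vec) \<in> carrier_vec c \<Longrightarrow> 0\<^sub>m r c *\<^sub>v v = 0\<^sub>v r"
  by (intro eq_vecI) auto

lemma fb_mult:
  fixes A B :: "real mat"
  assumes A: "A \<in> carrier_mat r1 c1" and B: "B \<in> carrier_mat r2 c2"
    and a: "a \<in> carrier_vec c1" and d: "d \<in> carrier_vec c2"
  shows "four_block_mat A (0\<^sub>m r1 c2) (0\<^sub>m r2 c1) B *\<^sub>v (a @\<^sub>v d) = (A *\<^sub>v a) @\<^sub>v (B *\<^sub>v d)"
proof -
  have z1: "0\<^sub>m r1 c2 *\<^sub>v d = 0\<^sub>v r1" using d by (intro eq_vecI) auto
  have z2: "0\<^sub>m r2 c1 *\<^sub>v a = 0\<^sub>v r2" using a by (intro eq_vecI) auto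
  show ?thesis
    by (subst four_block_mat_mult_vec[OF A _ _ B a d], insert A B a d z1 z2, auto)
qed

lemma blockdiag_props:
  assumes "\<forall>A\<in>set Cs. dim_col A = n"
  shows "blockdiag Cs \<in> carrier_mat (sum_list (map dim_row Cs)) (n * length Cs) \<and>
    (\<forall>v\<in>carrier_vec (n * length Cs). (blockdiag Cs *\<^sub>v v) \<bullet> (blockdiag Cs *\<^sub>v v) =
        (\<Sum>t<length Cs. (Cs ! t *\<^sub>v tblk v n t) \<bullet> (Cs ! t *\<^sub>v tblk v n t)))"
  using assms
proof (induct Cs)
  case Nil
  show ?case by (auto simp: scalar_prod_def)
next
  case (Cons A As)
  define B where "B = blockdiag As"
  define R where "R = sum_list (map dim_row As)"
  define k where "k = length As"
  from Cons have IH: "B \<in> carrier_mat R (n * k)"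
    "\<And>v. v \<in> carrier_vec (n * k) \<Longrightarrow> (B *\<^sub>v v) \<bullet> (B *\<^sub>v v) =
        (\<Sum>t<k. (As ! t *\<^sub>v tblk v n t) \<bullet> (As ! t *\<^sub>v tblk v n t))"
    unfolding B_def R_def k_def by auto
  define rA where "rA = dim_row A"
  have A: "A \<in> carrier_mat rA n" using Cons.prems unfolding rA_def by auto
  have bd: "blockdiag (A # As) = four_block_mat A (0\<^sub>m rA (n * k)) (0\<^sub>m R n) B"
  proof -
    have "dim_col A = n" "dim_row B = R" "dim_col B = n * k" using A IH(1) by auto
    thus ?thesis unfolding B_def rA_def by (simp add: Let_def)
  qed
  have car: "blockdiag (A # As) \<in> carrier_mat (sum_list (map dim_row (A # As))) (n * length (A # As))"
  proof -
    have e1: "sum_list (map dim_row (A # As)) = rA + R" by (simp add: R_def rA_def)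
    have e2: "n * length (A # As) = n + n * k" by (simp add: k_def)
    show ?thesis unfolding bd e1 e2 by (rule four_block_carrier_mat[OF A IH(1)])
  qed
  moreover have "(blockdiag (A # As) *\<^sub>v v) \<bullet> (blockdiag (A # As) *\<^sub>v v) =
        (\<Sum>t<length (A # As). ((A # As) ! t *\<^sub>v tblk v n t) \<bullet> ((A # As) ! t *\<^sub>v tblk v n t))"
    if v: "v \<in> carrier_vec (n * length (A # As))" for v
  proof -
    have v': "v \<in> carrier_vec (n + n * k)" using v by (simp add: k_def)
    define v1 where "v1 = vec_first v n"
    define v2 where "v2 = vec_last v (n * k)"
    have v1: "v1 \<in> carrier_vec n" and v2: "v2 \<in> carrier_vec (n * k)" unfolding v1_def v2_def by auto
    have vsplit: "v = v1 @\<^sub>v v2" unfolding v1_def v2_def using v' by simp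
    have t0: "tblk v n 0 = v1"
      unfolding tblk_def v1_def vec_first_def by (intro eq_vecI) auto
    have tS: "tblk v n (Suc t) = tblk v2 n t" if "t < k" for t
    proof (rule eq_vecI)
      fix a assume "a < dim_vec (tblk v2 n t)"
      hence a: "a < n" by (simp add: tblk_def)
      have "t * n + a < k * n"
      proof -
        have "t * n + a < t * n + n" using a by simp
        also have "\<dots> = Suc t * n" by simp
        also have "\<dots> \<le> k * n" using that by (intro mult_right_mono) auto
        finally show ?thesis .
      qed
      hence "n + t * n + a < n + n * k" by (simp add: mult.commute)
      thus "tblk v n (Suc t) $ a = tblk v2 n t $ a"
        using a v' \<open>t * n + a < k * n\<close> unfolding tblk_def v2_def vec_last_def
        by (simp add: add.assoc mult.commute)
    qed (simp add: tblk_def)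
    have "blockdiag (A # As) *\<^sub>v v = (A *\<^sub>v v1) @\<^sub>v (B *\<^sub>v v2)"
      unfolding bd vsplit by (rule fb_mult[OF A IH(1) v1 v2])
    hence "(blockdiag (A # As) *\<^sub>v v) \<bullet> (blockdiag (A # As) *\<^sub>v v) = (A *\<^sub>v v1) \<bullet> (A *\<^sub>v v1) + (B *\<^sub>v v2) \<bullet> (B *\<^sub>v v2)"
      using scalar_prod_append[of "A *\<^sub>v v1" rA "B *\<^sub>v v2" R "A *\<^sub>v v1" "B *\<^sub>v v2"] A IH(1) v1 v2 by simp
    also have "\<dots> = (A *\<^sub>v tblk v n 0) \<bullet> (A *\<^sub>v tblk v n 0) + (\<Sum>t<k. (As ! t *\<^sub>v tblk v n (Suc t)) \<bullet> (As ! t *\<^sub>v tblk v n (Suc t)))"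
      using IH(2)[OF v2] t0 tS by simp
    also have "\<dots> = (\<Sum>t<length (A # As). ((A # As) ! t *\<^sub>v tblk v n t) \<bullet> ((A # As) ! t *\<^sub>v tblk v n t))"
      unfolding k_def by (simp only: length_Cons sum.lessThan_Suc_shift nth_Cons_0 nth_Cons_Suc)
    finally show ?thesis .
  qed
  ultimately show ?case by blast
qed

lemma oto_props:
  fixes Cs :: "real mat list"
  assumes "\<forall>A\<in>set Cs. dim_col A = n"
  defines "Om \<equiv> foldr (\<lambda>A acc. transpose_mat A * A + acc) Cs (0\<^sub>m n n)"
  shows "Om \<in> carrier_mat n n \<and> transpose_mat Om = Om \<and>
     (\<forall>z\<in>carrier_vec n. z \<bullet> (Om *\<^sub>v z) = (\<Sum>t<length Cs. (Cs ! t *\<^sub>v z) \<bullet> (Cs ! t *\<^sub>v z)))"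
  using assms(1) unfolding Om_def
proof (induct Cs)
  case Nil
  have "z \<bullet> (0\<^sub>m n n *\<^sub>v z) = 0" if "z \<in> carrier_vec n" for z :: "real vec"
    using zero_mat_mult_vec[OF that, of n] that by simp
  thus ?case by auto
next
  case (Cons A As)
  define R where "R = foldr (\<lambda>A acc. transpose_mat A * A + acc) As (0\<^sub>m n n)"
  from Cons have IH: "R \<in> carrier_mat n n" "transpose_mat R = R"
    "\<And>z. z \<in> carrier_vec n \<Longrightarrow> z \<bullet> (R *\<^sub>v z) = (\<Sum>t<length As. (As ! t *\<^sub>v z) \<bullet> (As ! t *\<^sub>v z))"
    unfolding R_def by auto
  define rA where "rA = dim_row A"
  have A: "A \<in> carrier_mat rA n" using Cons.prems unfolding rA_def by auto
  have G: "transpose_mat A * A \<in> carrier_mat n n" using A by simp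
  have e: "foldr (\<lambda>A acc. transpose_mat A * A + acc) (A # As) (0\<^sub>m n n) = transpose_mat A * A + R"
    unfolding R_def by simp
  have "transpose_mat (transpose_mat A * A + R) = transpose_mat A * A + R"
    using transpose_add[OF G IH(1)] IH(2) gram_sym[of A] by simp
  moreover have "z \<bullet> ((transpose_mat A * A + R) *\<^sub>v z) = (\<Sum>t<length (A # As). ((A # As) ! t *\<^sub>v z) \<bullet> ((A # As) ! t *\<^sub>v z))"
    if z: "z \<in> carrier_vec n" for z
  proof -
    have "(transpose_mat A * A + R) *\<^sub>v z = (transpose_mat A * A) *\<^sub>v z + R *\<^sub>v z"
      by (rule add_mult_distrib_mat_vec[OF G IH(1) z])
    hence "z \<bullet> ((transpose_mat A * A + R) *\<^sub>v z) = z \<bullet> ((transpose_mat A * A) *\<^sub>v z) + z \<bullet> (R *\<^sub>v z)"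
      using z G IH(1) by (simp add: scalar_prod_add_distrib[of _ n])
    also have "\<dots> = (A *\<^sub>v z) \<bullet> (A *\<^sub>v z) + (\<Sum>t<length As. (As ! t *\<^sub>v z) \<bullet> (As ! t *\<^sub>v z))"
      using gram_quad[OF A z] IH(3)[OF z] by simp
    also have "\<dots> = (\<Sum>t<length (A # As). ((A # As) ! t *\<^sub>v z) \<bullet> ((A # As) ! t *\<^sub>v z))"
      by (simp only: length_Cons sum.lessThan_Suc_shift nth_Cons_0 nth_Cons_Suc)
    finally show ?thesis .
  qed
  ultimately show ?case unfolding e using G IH(1) by auto
qed

lemma spec_bound:
  fixes A :: "real mat"
  assumes A: "A \<in> carrier_mat r c" and v: "v \<in> carrier_vec c"
  shows "vnorm (A *\<^sub>v v) \<le> spec_norm A * vnorm v"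
proof -
  define S where "S = {vnorm (A *\<^sub>v v) | v. v \<in> carrier_vec (dim_col A) \<and> vnorm v = 1}"
  have bdd: "bdd_above S"
  proof
    fix s assume "s \<in> S"
    then obtain u where u: "u \<in> carrier_vec c" "vnorm u = 1" and s: "s = vnorm (A *\<^sub>v u)"
      unfolding S_def using A by auto
    have "u \<bullet> u = 1" using u(2) sprod_self_nonneg[of u] unfolding vnorm_def by simp
    hence "(A *\<^sub>v u) \<bullet> (A *\<^sub>v u) \<le> frob A" using mat_vec_bound[OF A u(1)] by simp
    thus "s \<le> sqrt (frob A)" unfolding s vnorm_def by simp
  qed
  show ?thesis
  proof (cases "v = 0\<^sub>v c")
    case True
    thus ?thesis using A mat_zero_vec_gen[OF A] by (simp add: vnorm_def)
  next
    case False
    have pos: "v \<bullet> v > 0" using sprod_self_eq0[OF v] sprod_self_nonneg[of v] False by linarith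
    define nv where "nv = vnorm v"
    have nv: "nv > 0" unfolding nv_def vnorm_def using pos by simp
    define u where "u = (1 / nv) \<cdot>\<^sub>v v"
    have u: "u \<in> carrier_vec c" unfolding u_def using v by simp
    have "u \<bullet> u = (1/nv)^2 * (v \<bullet> v)" unfolding u_def using v by (simp add: power2_eq_square)
    also have "\<dots> = 1" unfolding nv_def vnorm_def using pos by (simp add: power2_eq_square)
    finally have "vnorm u = 1" unfolding vnorm_def by simp
    hence "vnorm (A *\<^sub>v u) \<in> S" unfolding S_def using u A by auto
    hence le: "vnorm (A *\<^sub>v u) \<le> spec_norm A" unfolding spec_norm_def S_def[symmetric]
      by (rule cSup_upper[OF _ bdd])
    have "A *\<^sub>v u = (1 / nv) \<cdot>\<^sub>v (A *\<^sub>v v)" unfolding u_def by (rule mult_mat_vec[OF A v])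
    hence "vnorm (A *\<^sub>v u) = vnorm (A *\<^sub>v v) / nv" unfolding vnorm_def using A v nv
      by (simp add: real_sqrt_divide)
    hence "vnorm (A *\<^sub>v v) = nv * vnorm (A *\<^sub>v u)" using nv by simp
    also have "\<dots> \<le> nv * spec_norm A" using le nv by simp
    finally show ?thesis unfolding nv_def by (simp add: mult.commute)
  qed
qed

lemma case1_ineq:
  fixes a c b2 b3 q k X :: real
  assumes a: "a \<ge> 0" and c: "c \<ge> 0" and b2: "b2 > 0" and b3: "b3 > 0" and q: "q > 0"
    and k0: "k \<ge> 0" and kdef: "k * (b2^2 + b3^2) = q * b2^2 / 4" and kb: "2 * k \<le> b2"
    and X1: "q * c^2 \<le> X" and X2: "q * c^2 + b2 * a^2 - b3 * a * c \<le> X"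
  shows "k * (a^2 + c^2) \<le> X"
proof (cases "b2 * a \<le> b3 * c")
  case True
  have "(b2 * a)^2 \<le> (b3 * c)^2" using True a b2 by (intro power_mono) auto
  hence "k * (b2^2 * a^2) \<le> k * (b3^2 * c^2)" using k0 by (intro mult_left_mono) (auto simp: power_mult_distrib)
  hence "b2^2 * (k * (a^2 + c^2)) \<le> k * (b2^2 + b3^2) * c^2" by (simp add: algebra_simps)
  also have "\<dots> = b2^2 * (q * c^2 / 4)" unfolding kdef by simp
  finally have "b2^2 * (k * (a^2 + c^2)) \<le> b2^2 * (q * c^2 / 4)" .
  moreover have "b2^2 > 0" using b2 by simp
  ultimately have "k * (a^2 + c^2) \<le> q * c^2 / 4" by (simp only: mult_le_cancel_left_pos)
  also have "\<dots> \<le> q * c^2" using q by simp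
  finally show ?thesis using X1 by simp
next
  case False
  define s where "s = b2 * a - b3 * c"
  have s: "s \<ge> 0" unfolding s_def using False by simp
  have ae: "b2 * a = s + b3 * c" unfolding s_def by simp
  have "b2^2 * ((b2 - k) * a^2 - b3 * a * c + (q - k) * c^2)
     = (b2 - k) * (b2 * a)^2 - b3 * b2 * c * (b2 * a) + (q - k) * b2^2 * c^2"
    by (simp add: algebra_simps power2_eq_square)
  also have "\<dots> = (b2 - k) * s^2 + (b2 - 2 * k) * b3 * c * s + (q * b2^2 - k * (b2^2 + b3^2)) * c^2"
    unfolding ae by (simp add: algebra_simps power2_eq_square)
  also have "\<dots> = (b2 - k) * s^2 + (b2 - 2 * k) * b3 * c * s + (3/4 * q * b2^2) * c^2"
    using kdef by simp
  also have "\<dots> \<ge> 0" using s c b3 kb q k0 b2 by (intro add_nonneg_nonneg mult_nonneg_nonneg) auto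
  finally have "0 \<le> (b2 - k) * a^2 - b3 * a * c + (q - k) * c^2"
    using b2 by (simp add: zero_le_mult_iff)
  thus ?thesis using X2 by (simp add: algebra_simps)
qed

lemma case2_ineq:
  fixes a c b2 b3 q X :: real
  assumes a: "a \<ge> 0" and c: "c \<ge> 0" and b2: "b2 > 0" and b3: "b3 > 0" and q: "q > 0"
    and big: "4 * b2 * q > b3^2"
    and X2: "q * c^2 + b2 * a^2 - b3 * a * c \<le> X"
  defines "s \<equiv> sqrt ((q - b2)^2 + b3^2)"
  defines "l \<equiv> (b2 + q - s) / 2"
  shows "l > 0" "l * (a^2 + c^2) \<le> X"
proof -
  have s0: "s \<ge> 0" unfolding s_def by simp
  have ss: "s^2 = (q - b2)^2 + b3^2" unfolding s_def by simp
  have "s^2 < (b2 + q)^2" using ss big by (simp add: power2_eq_square algebra_simps)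
  hence "s < b2 + q" using s0 b2 q by (smt (verit) power_mono)
  thus "l > 0" unfolding l_def by simp
  define al where "al = b2 - l"
  define be where "be = q - l"
  have "(q - b2)^2 \<le> s^2" using ss by simp
  hence "\<bar>q - b2\<bar> \<le> s" using s0 by (metis abs_le_square_iff abs_of_nonneg)
  hence al0: "al \<ge> 0" and be0: "be \<ge> 0" unfolding al_def be_def l_def by auto
  have h1: "2 * al = b2 - q + s" and h2: "2 * be = q - b2 + s" unfolding al_def be_def l_def by (simp_all add: field_simps)
  have "4 * (al * be) = (2 * al) * (2 * be)" by simp
  also have "\<dots> = (b2 - q + s) * (q - b2 + s)" using h1 h2 by simp
  also have "\<dots> = s^2 - (q - b2)^2" by (simp add: power2_eq_square algebra_simps)
  finally have ab: "al * be = b3^2 / 4" using ss by simp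
  have "sqrt al * sqrt be = b3 / 2"
  proof -
    have "sqrt al * sqrt be = sqrt (b3^2 / 4)" using ab by (simp add: real_sqrt_mult[symmetric])
    also have "\<dots> = b3 / 2" using b3 by (simp add: real_sqrt_divide)
    finally show ?thesis .
  qed
  hence "0 \<le> (sqrt al * a - sqrt be * c)^2 " by simp
  also have "(sqrt al * a - sqrt be * c)^2 = al * a^2 - 2 * (sqrt al * sqrt be) * a * c + be * c^2"
    using al0 be0 by (simp add: power2_eq_square algebra_simps)
  also have "\<dots> = al * a^2 - b3 * a * c + be * c^2" using \<open>sqrt al * sqrt be = b3 / 2\<close> by simp
  finally have "0 \<le> al * a^2 - b3 * a * c + be * c^2" .
  thus "l * (a^2 + c^2) \<le> X" using X2 unfolding al_def be_def by (simp add: algebra_simps)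
qed

lemma lam2d:
  fixes b1 b2 b3 \<mu> a c X :: real
  assumes b1: "b1 > 0" and b2: "b2 > 0" and b3: "b3 > 0" and mu: "\<mu> > 0"
    and a: "a \<ge> 0" and c: "c \<ge> 0"
    and X1: "\<mu> * b1 * c^2 \<le> X" and X2: "\<mu> * b1 * c^2 + b2 * a^2 - b3 * a * c \<le> X"
  shows "lam_bar' b1 b2 b3 \<mu> > 0" "lam_bar' b1 b2 b3 \<mu> / 2 * (a^2 + c^2) \<le> X"
proof -
  define q where "q = \<mu> * b1"
  have q: "q > 0" unfolding q_def using b1 mu by simp
  have B: "b2^2 + b3^2 > 0" using b2 by (simp add: add_pos_nonneg)
  have "lam_bar' b1 b2 b3 \<mu> > 0 \<and> lam_bar' b1 b2 b3 \<mu> / 2 * (a^2 + c^2) \<le> X"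
  proof (cases "q < b2 + (b3^2 - b2^2) / (2 * b2)")
    case True
    hence lb: "lam_bar' b1 b2 b3 \<mu> = b2^2 / (2 * (b2^2 + b3^2)) * q"
      unfolding lam_bar'_def q_def by simp
    have cond: "2 * b2 * q < b2^2 + b3^2"
    proof -
      have "2 * b2 * q < 2 * b2 * (b2 + (b3^2 - b2^2) / (2 * b2))" using True b2 by simp
      also have "\<dots> = b2^2 + b3^2" using b2 by (simp add: field_simps power2_eq_square)
      finally show ?thesis .
    qed
    define k where "k = lam_bar' b1 b2 b3 \<mu> / 2"
    have kdef: "k * (b2^2 + b3^2) = q * b2^2 / 4" unfolding k_def lb using B by (simp add: field_simps)
    have k0: "k > 0" unfolding k_def lb using b2 B q by (simp add: divide_pos_pos)
    have "2 * k * (b2^2 + b3^2) \<le> b2 * (b2^2 + b3^2)"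
    proof -
      have "2 * k * (b2^2 + b3^2) = q * b2^2 / 2" using kdef by simp
      also have "\<dots> = b2 * (2 * b2 * q) / 4" by (simp add: power2_eq_square)
      also have "\<dots> \<le> b2 * (b2^2 + b3^2) / 4" using cond b2 by simp
      also have "\<dots> \<le> b2 * (b2^2 + b3^2)" using b2 B by simp
      finally show ?thesis .
    qed
    hence kb: "2 * k \<le> b2" using B by simp
    have "k * (a^2 + c^2) \<le> X"
      by (rule case1_ineq[OF a c b2 b3 q _ kdef kb], insert k0 X1 X2, auto simp: q_def)
    thus ?thesis using k0 unfolding k_def by simp
  next
    case False
    define d where "d = q - b2"
    define s where "s = sqrt (b3^2 + (q - b2)^2)"
    have s0: "s > 0" unfolding s_def using b3 by (intro real_sqrt_gt_zero add_pos_nonneg) auto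
    have ss: "s^2 = d^2 + b3^2" unfolding s_def d_def by simp
    have seq: "sqrt ((q - b2)^2 + b3^2) = s" unfolding s_def by (simp add: add.commute)
    have lb: "lam_bar' b1 b2 b3 \<mu> = 1/4 * (1 - d / s) * q + b2 / 4 + (b2 * d - b3^2) / (4 * s)"
      using False unfolding lam_bar'_def q_def d_def s_def by simp
    also have "\<dots> = (s * (q + b2) - (d^2 + b3^2)) / (4 * s)"
      using s0 by (simp add: field_simps d_def power2_eq_square)
    also have "\<dots> = (b2 + q - s) / 4" unfolding ss[symmetric] using s0
      by (simp add: field_simps power2_eq_square)
    finally have lb: "lam_bar' b1 b2 b3 \<mu> / 2 = ((b2 + q - s) / 2) / 4" by simp
    have cond: "2 * b2 * q \<ge> b2^2 + b3^2"
    proof -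
      have "2 * b2 * q \<ge> 2 * b2 * (b2 + (b3^2 - b2^2) / (2 * b2))" using False b2 by simp
      moreover have "2 * b2 * (b2 + (b3^2 - b2^2) / (2 * b2)) = b2^2 + b3^2" using b2 by (simp add: field_simps power2_eq_square)
      ultimately show ?thesis by simp
    qed
    have "b2^2 > 0" "b3^2 > 0" using b2 b3 by simp_all
    hence big: "4 * b2 * q > b3^2" using cond by linarith
    have c2: "(b2 + q - s) / 2 > 0" "(b2 + q - s) / 2 * (a^2 + c^2) \<le> X"
      using case2_ineq[OF a c b2 b3 q big, of X] X2 unfolding seq by (auto simp: q_def)
    have "lam_bar' b1 b2 b3 \<mu> / 2 * (a^2 + c^2) = (b2 + q - s) / 2 / 4 * (a^2 + c^2)" using lb by simp
    also have "\<dots> \<le> (b2 + q - s) / 2 * (a^2 + c^2)"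
      using c2(1) by (intro mult_right_mono) auto
    also have "\<dots> \<le> X" by (rule c2(2))
    finally have "lam_bar' b1 b2 b3 \<mu> / 2 * (a^2 + c^2) \<le> X" .
    moreover have "lam_bar' b1 b2 b3 \<mu> > 0" using lb c2(1) by linarith
    ultimately show ?thesis by simp
  qed
  thus "lam_bar' b1 b2 b3 \<mu> > 0" "lam_bar' b1 b2 b3 \<mu> / 2 * (a^2 + c^2) \<le> X" by auto
qed

lemma smult_mat_vec:
  fixes A :: "real mat"
  assumes A: "A \<in> carrier_mat r c" and v: "v \<in> carrier_vec c"
  shows "(k \<cdot>\<^sub>m A) *\<^sub>v v = k \<cdot>\<^sub>v (A *\<^sub>v v)"
proof (rule eq_vecI)
  fix i assume "i < dim_vec (k \<cdot>\<^sub>v (A *\<^sub>v v))"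
  hence i: "i < r" using A by simp
  have "row (k \<cdot>\<^sub>m A) i = k \<cdot>\<^sub>v row A i" using A i by (intro eq_vecI) auto
  thus "((k \<cdot>\<^sub>m A) *\<^sub>v v) $ i = (k \<cdot>\<^sub>v (A *\<^sub>v v)) $ i"
    using A v i by (simp add: smult_scalar_prod_distrib[of _ c])
qed (insert A, simp)

lemma quadP:
  fixes M C :: "real mat"
  assumes M: "M \<in> carrier_mat rM N" and C: "C \<in> carrier_mat rC N" and y: "y \<in> carrier_vec N"
  shows "y \<bullet> ((\<mu> \<cdot>\<^sub>m (transpose_mat M * M) + transpose_mat C * C) *\<^sub>v y)
     = \<mu> * ((M *\<^sub>v y) \<bullet> (M *\<^sub>v y)) + (C *\<^sub>v y) \<bullet> (C *\<^sub>v y)"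
proof -
  have G1: "transpose_mat M * M \<in> carrier_mat N N" using M by simp
  have G2: "transpose_mat C * C \<in> carrier_mat N N" using C by simp
  have "(\<mu> \<cdot>\<^sub>m (transpose_mat M * M) + transpose_mat C * C) *\<^sub>v y
      = (\<mu> \<cdot>\<^sub>m (transpose_mat M * M)) *\<^sub>v y + (transpose_mat C * C) *\<^sub>v y"
    by (rule add_mult_distrib_mat_vec[of _ N N], insert G1 G2 y, auto)
  also have "(\<mu> \<cdot>\<^sub>m (transpose_mat M * M)) *\<^sub>v y = \<mu> \<cdot>\<^sub>v ((transpose_mat M * M) *\<^sub>v y)"
    by (rule smult_mat_vec[OF G1 y])
  finally have e: "(\<mu> \<cdot>\<^sub>m (transpose_mat M * M) + transpose_mat C * C) *\<^sub>v y
      = \<mu> \<cdot>\<^sub>v ((transpose_mat M * M) *\<^sub>v y) + (transpose_mat C * C) *\<^sub>v y" .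
  show ?thesis unfolding e using G1 G2 y gram_quad[OF M y] gram_quad[OF C y]
    by (simp add: scalar_prod_add_distrib[of _ N])
qed

lemma minv_props:
  fixes P :: "real mat"
  assumes P: "P \<in> carrier_mat N N" and B: "B \<in> carrier_mat N N" and BP: "B * P = 1\<^sub>m N" and PB: "P * B = 1\<^sub>m N"
  shows "minv P \<in> carrier_mat N N" "P * minv P = 1\<^sub>m N"
proof -
  have "inverts_mat P B \<and> inverts_mat B P" unfolding inverts_mat_def using P B BP PB by auto
  hence "inverts_mat P (minv P) \<and> inverts_mat (minv P) P" unfolding minv_def by (rule someI)
  hence 1: "P * minv P = 1\<^sub>m N" and 2: "minv P * P = 1\<^sub>m (dim_row (minv P))"
    unfolding inverts_mat_def using P by auto
  have "dim_col (P * minv P) = N" using 1 by simp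
  hence c: "dim_col (minv P) = N" by simp
  have "dim_col (minv P * P) = dim_row (minv P)" using 2 by simp
  hence r: "dim_row (minv P) = N" using P by simp
  show "minv P \<in> carrier_mat N N" using r c by auto
  show "P * minv P = 1\<^sub>m N" by (rule 1)
qed

lemma abs_sprod_le:
  fixes u v :: "real vec"
  assumes "u \<in> carrier_vec N" "v \<in> carrier_vec N"
  shows "\<bar>u \<bullet> v\<bar> \<le> vnorm u * vnorm v"
proof -
  have "(u \<bullet> v)^2 \<le> (u \<bullet> u) * (v \<bullet> v)" by (rule vec_cs[OF assms])
  hence "sqrt ((u \<bullet> v)^2) \<le> sqrt ((u \<bullet> u) * (v \<bullet> v))" by (rule real_sqrt_le_mono)
  thus ?thesis unfolding vnorm_def by (simp add: real_sqrt_mult)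
qed

lemma vnorm_sq: "(vnorm v)^2 = (v :: real vec) \<bullet> v"
  unfolding vnorm_def using sprod_self_nonneg[of v] by simp

lemma vnorm_nonneg: "vnorm v \<ge> 0"
  unfolding vnorm_def using sprod_self_nonneg[of v] by simp

lemma idx_bound: fixes v a n T :: nat assumes "v < T" "a < n" shows "v * n + a < n * T"
proof -
  have "v * n + a < v * n + n" using assms by simp
  also have "\<dots> = Suc v * n" by simp
  also have "\<dots> \<le> T * n" using assms by (intro mult_right_mono) auto
  finally show ?thesis by (simp add: mult.commute)
qed

lemma decomp:
  fixes n T :: nat and es :: "(nat \<times> nat) list" and Cs :: "real mat list"
    and y :: "real vec" and b1 b2 b3 \<mu> :: real
  defines "D \<equiv> incidence T es"
  defines "L \<equiv> transpose_mat D * D"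
  defines "M \<equiv> kron D (1\<^sub>m n)"
  defines "C \<equiv> blockdiag Cs"
  defines "OtO \<equiv> foldr (\<lambda>A acc. transpose_mat A * A + acc) Cs (0\<^sub>m n n)"
  assumes n1: "n \<ge> 1" and T2: "T \<ge> 2"
    and cg: "connected_graph T es"
    and lenC: "length Cs = T" and dims: "\<forall>A\<in>set Cs. dim_col A = n"
    and lmin: "lam_min OtO > 0"
    and y: "y \<in> carrier_vec (n * T)"
    and b1: "b1 > 0" and b2: "b2 > 0" and b3: "b3 > 0"
    and eig: "eig_desc L (T - 1) \<ge> b1"
    and hb2: "lam_min OtO / T \<ge> b2"
    and hb3: "2 * spec_norm C * sqrt (lam_max OtO) / sqrt T \<le> b3"
    and mu: "\<mu> > 0"
  shows "lam_bar' b1 b2 b3 \<mu> / 2 * (y \<bullet> y) \<le> \<mu> * ((M *\<^sub>v y) \<bullet> (M *\<^sub>v y)) + (C *\<^sub>v y) \<bullet> (C *\<^sub>v y)"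
proof -
  have sg: "simple_graph T es" using cg unfolding connected_graph_def by simp
  have D: "D \<in> carrier_mat (length es) T" unfolding D_def by simp
  have Tpos: "real T > 0" using T2 by simp
  have npos: "0 < n" using n1 by simp
  from blockdiag_props[OF dims] lenC
  have C: "C \<in> carrier_mat (sum_list (map dim_row Cs)) (n * T)"
    and Cn: "\<And>v. v \<in> carrier_vec (n * T) \<Longrightarrow> (C *\<^sub>v v) \<bullet> (C *\<^sub>v v) =
        (\<Sum>t<T. (Cs ! t *\<^sub>v tblk v n t) \<bullet> (Cs ! t *\<^sub>v tblk v n t))"
    unfolding C_def by auto
  from oto_props[OF dims] have O: "OtO \<in> carrier_mat n n" and sO: "transpose_mat OtO = OtO"
    and Oq: "\<And>z. z \<in> carrier_vec n \<Longrightarrow> z \<bullet> (OtO *\<^sub>v z) = (\<Sum>t<length Cs. (Cs ! t *\<^sub>v z) \<bullet> (Cs ! t *\<^sub>v z))"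
    unfolding OtO_def by auto
  define zb where "zb = vec n (\<lambda>a. (\<Sum>v<T. y $ (v*n+a)) / real T)"
  define p where "p = vec (n*T) (\<lambda>c. zb $ (c mod n))"
  define w where "w = vec (n*T) (\<lambda>c. y $ c - zb $ (c mod n))"
  have zbc: "zb \<in> carrier_vec n" unfolding zb_def by simp
  have pc: "p \<in> carrier_vec (n*T)" unfolding p_def by simp
  have wc: "w \<in> carrier_vec (n*T)" unfolding w_def by simp
  have ypw: "y = p + w" using y unfolding p_def w_def by (intro eq_vecI) auto
  have modn: "(v * n + a) mod n = a" if "a < n" for v a using that by simp
  have blkp: "blk p n a T = vec T (\<lambda>v. zb $ a)" if a: "a < n" for a
    unfolding blk_def p_def using a idx_bound[of _ T a n] by (intro eq_vecI) auto
  have blkw: "blk w n a T $ v = y $ (v*n+a) - zb $ a" if a: "a < n" and v: "v < T" for a v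
    unfolding blk_def w_def using a v idx_bound[OF v a] by simp
  have blkwsum: "(\<Sum>v<T. blk w n a T $ v) = 0" if a: "a < n" for a
  proof -
    have "(\<Sum>v<T. blk w n a T $ v) = (\<Sum>v<T. y $ (v*n+a) - zb $ a)"
      using blkw[OF a] by (intro sum.cong) auto
    also have "\<dots> = (\<Sum>v<T. y $ (v*n+a)) - real T * zb $ a" by (simp add: sum_subtractf)
    also have "\<dots> = 0" unfolding zb_def using a Tpos by simp
    finally show ?thesis .
  qed
  have Dw: "D *\<^sub>v blk w n a T = D *\<^sub>v blk y n a T" if a: "a < n" for a
  proof (rule eq_vecI)
    fix k assume "k < dim_vec (D *\<^sub>v blk y n a T)"
    hence k: "k < length es" using D by simp
    obtain i j where ij: "es ! k = (i, j)" by (cases "es ! k")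
    have "(i,j) \<in> set es" using k ij by (metis nth_mem)
    hence i: "i < T" and j: "j < T" using sg unfolding simple_graph_def by auto
    have "(D *\<^sub>v blk w n a T) $ k = blk w n a T $ i - blk w n a T $ j"
      unfolding D_def using inc_mult[OF sg blk_carrier k] ij by simp
    also have "\<dots> = blk y n a T $ i - blk y n a T $ j"
      using blkw[OF a i] blkw[OF a j] i j by (simp add: blk_def)
    also have "\<dots> = (D *\<^sub>v blk y n a T) $ k"
      unfolding D_def using inc_mult[OF sg blk_carrier k] ij by simp
    finally show "(D *\<^sub>v blk w n a T) $ k = (D *\<^sub>v blk y n a T) $ k" .
  qed (insert D, simp)
  define e where "e = eig_desc L (T - 1)"
  have wlap: "e * (blk w n a T \<bullet> blk w n a T) \<le> (D *\<^sub>v blk y n a T) \<bullet> (D *\<^sub>v blk y n a T)"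
    if a: "a < n" for a
    using lap_bound[OF cg T2 blk_carrier blkwsum[OF a]] Dw[OF a]
    unfolding e_def L_def D_def by simp
  have My: "(M *\<^sub>v y) \<bullet> (M *\<^sub>v y) = (\<Sum>a<n. (D *\<^sub>v blk y n a T) \<bullet> (D *\<^sub>v blk y n a T))"
    unfolding M_def by (rule kron_norm[OF D y])
  have ww: "w \<bullet> w = (\<Sum>a<n. blk w n a T \<bullet> blk w n a T)" by (rule sprod_blocks[OF wc wc])
  have "e * (w \<bullet> w) \<le> (M *\<^sub>v y) \<bullet> (M *\<^sub>v y)"
    unfolding ww My sum_distrib_left by (intro sum_mono wlap) simp
  moreover have "b1 * (w \<bullet> w) \<le> e * (w \<bullet> w)"
    using eig sprod_self_nonneg[of w] unfolding e_def by (intro mult_right_mono) auto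
  ultimately have Mw: "b1 * (w \<bullet> w) \<le> (M *\<^sub>v y) \<bullet> (M *\<^sub>v y)" by linarith
  have pp: "p \<bullet> p = real T * (zb \<bullet> zb)"
  proof -
    have "p \<bullet> p = (\<Sum>a<n. blk p n a T \<bullet> blk p n a T)" by (rule sprod_blocks[OF pc pc])
    also have "\<dots> = (\<Sum>a<n. real T * (zb $ a * zb $ a))"
      using blkp by (intro sum.cong) (auto simp: sprod_carrier_sum[of _ T])
    also have "\<dots> = real T * (zb \<bullet> zb)" using zbc by (simp add: sum_distrib_left sprod_carrier_sum[of _ n])
    finally show ?thesis .
  qed
  have pw: "p \<bullet> w = 0"
  proof -
    have "p \<bullet> w = (\<Sum>a<n. blk p n a T \<bullet> blk w n a T)" by (rule sprod_blocks[OF pc wc])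
    also have "\<dots> = (\<Sum>a<n. zb $ a * (\<Sum>v<T. blk w n a T $ v))"
      using blkp by (intro sum.cong) (auto simp: sprod_carrier_sum[of _ T] sum_distrib_left)
    also have "\<dots> = 0" using blkwsum by simp
    finally show ?thesis .
  qed
  have yy: "y \<bullet> y = p \<bullet> p + w \<bullet> w"
  proof -
    have "y \<bullet> y = p \<bullet> p + p \<bullet> w + (w \<bullet> p + w \<bullet> w)" unfolding ypw using pc wc
      by (simp add: add_scalar_prod_distrib[of _ "n*T"] scalar_prod_add_distrib[of _ "n*T"])
    also have "w \<bullet> p = p \<bullet> w" by (rule comm_scalar_prod[OF wc pc])
    finally show ?thesis using pw by simp
  qed
  have tp: "tblk p n t = zb" if t: "t < T" for t
  proof (rule eq_vecI)
    fix i assume "i < dim_vec zb"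
    hence i: "i < n" using zbc by simp
    have b: "t * n + i < n * T" by (rule idx_bound[OF t i])
    show "tblk p n t $ i = zb $ i" unfolding tblk_def p_def using i b by simp
  qed (insert zbc, simp add: tblk_def)
  have Cp: "(C *\<^sub>v p) \<bullet> (C *\<^sub>v p) = zb \<bullet> (OtO *\<^sub>v zb)"
    unfolding Cn[OF pc] Oq[OF zbc] lenC using tp by (intro sum.cong) auto
  have u0: "unit_vec n 0 \<in> carrier_vec n" "unit_vec n 0 \<bullet> unit_vec n 0 = (1::real)"
    using npos scalar_prod_left_unit[of "unit_vec n 0" n 0] by auto
  have "lam_min OtO \<le> lam_max OtO"
    using lam_min_rayleigh[OF O sO npos u0(1)] lam_max_rayleigh[OF O sO npos u0(1)] u0(2) by simp
  hence lmax: "lam_max OtO > 0" using lmin by simp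
  have Cp_low: "b2 * (p \<bullet> p) \<le> (C *\<^sub>v p) \<bullet> (C *\<^sub>v p)"
  proof -
    have "b2 * (p \<bullet> p) = (b2 * real T) * (zb \<bullet> zb)" unfolding pp by simp
    also have "\<dots> \<le> lam_min OtO * (zb \<bullet> zb)"
      using hb2 Tpos sprod_self_nonneg[of zb] by (intro mult_right_mono) (auto simp: field_simps)
    also have "\<dots> \<le> zb \<bullet> (OtO *\<^sub>v zb)" by (rule lam_min_rayleigh[OF O sO npos zbc])
    finally show ?thesis unfolding Cp .
  qed
  have Cp_up: "vnorm (C *\<^sub>v p) \<le> sqrt (lam_max OtO) * vnorm zb"
  proof -
    have "(C *\<^sub>v p) \<bullet> (C *\<^sub>v p) \<le> lam_max OtO * (zb \<bullet> zb)"
      unfolding Cp by (rule lam_max_rayleigh[OF O sO npos zbc])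
    hence "sqrt ((C *\<^sub>v p) \<bullet> (C *\<^sub>v p)) \<le> sqrt (lam_max OtO * (zb \<bullet> zb))" by (rule real_sqrt_le_mono)
    thus ?thesis unfolding vnorm_def by (simp add: real_sqrt_mult)
  qed
  have Cw_up: "vnorm (C *\<^sub>v w) \<le> spec_norm C * vnorm w" by (rule spec_bound[OF C wc])
  define aa where "aa = vnorm p"
  define cc where "cc = vnorm w"
  have aa0: "aa \<ge> 0" and cc0: "cc \<ge> 0" unfolding aa_def cc_def by (simp_all add: vnorm_nonneg)
  have aa2: "aa^2 = p \<bullet> p" and cc2: "cc^2 = w \<bullet> w" unfolding aa_def cc_def by (simp_all add: vnorm_sq)
  have aaz: "aa = sqrt (real T) * vnorm zb" unfolding aa_def vnorm_def pp by (simp add: real_sqrt_mult)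
  have Cyd: "C *\<^sub>v y = C *\<^sub>v p + C *\<^sub>v w" unfolding ypw by (rule mult_add_distrib_mat_vec[OF C pc wc])
  have CpC: "C *\<^sub>v p \<in> carrier_vec (sum_list (map dim_row Cs))" and CwC: "C *\<^sub>v w \<in> carrier_vec (sum_list (map dim_row Cs))"
    using C pc wc by auto
  have CyCy: "(C *\<^sub>v y) \<bullet> (C *\<^sub>v y) = (C *\<^sub>v p) \<bullet> (C *\<^sub>v p) + 2 * ((C *\<^sub>v p) \<bullet> (C *\<^sub>v w)) + (C *\<^sub>v w) \<bullet> (C *\<^sub>v w)"
  proof -
    have "(C *\<^sub>v y) \<bullet> (C *\<^sub>v y) = (C *\<^sub>v p) \<bullet> (C *\<^sub>v p) + (C *\<^sub>v p) \<bullet> (C *\<^sub>v w) + ((C *\<^sub>v w) \<bullet> (C *\<^sub>v p) + (C *\<^sub>v w) \<bullet> (C *\<^sub>v w))"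
      unfolding Cyd using CpC CwC
      by (simp add: add_scalar_prod_distrib[of _ "sum_list (map dim_row Cs)"] scalar_prod_add_distrib[of _ "sum_list (map dim_row Cs)"])
    also have "(C *\<^sub>v w) \<bullet> (C *\<^sub>v p) = (C *\<^sub>v p) \<bullet> (C *\<^sub>v w)" by (rule comm_scalar_prod[OF CwC CpC])
    finally show ?thesis by simp
  qed
  have cross: "2 * \<bar>(C *\<^sub>v p) \<bullet> (C *\<^sub>v w)\<bar> \<le> b3 * aa * cc"
  proof -
    have "\<bar>(C *\<^sub>v p) \<bullet> (C *\<^sub>v w)\<bar> \<le> vnorm (C *\<^sub>v p) * vnorm (C *\<^sub>v w)" by (rule abs_sprod_le[OF CpC CwC])
    also have "\<dots> \<le> (sqrt (lam_max OtO) * vnorm zb) * (spec_norm C * vnorm w)"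
      using lmax by (intro mult_mono Cp_up Cw_up) (auto simp: vnorm_nonneg)
    finally have "2 * \<bar>(C *\<^sub>v p) \<bullet> (C *\<^sub>v w)\<bar> \<le> 2 * ((sqrt (lam_max OtO) * vnorm zb) * (spec_norm C * vnorm w))"
      by simp
    also have "\<dots> = (2 * spec_norm C * sqrt (lam_max OtO) / sqrt T) * aa * cc"
      unfolding aaz cc_def using Tpos by (simp add: field_simps)
    also have "\<dots> \<le> b3 * aa * cc" using hb3 aa0 cc0 by (intro mult_right_mono) auto
    finally show ?thesis .
  qed
  define X where "X = \<mu> * ((M *\<^sub>v y) \<bullet> (M *\<^sub>v y)) + (C *\<^sub>v y) \<bullet> (C *\<^sub>v y)"
  have muM: "\<mu> * b1 * cc^2 \<le> \<mu> * ((M *\<^sub>v y) \<bullet> (M *\<^sub>v y))"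
    unfolding cc2 using Mw mu by (simp add: mult.assoc)
  have X1: "\<mu> * b1 * cc^2 \<le> X" unfolding X_def using muM sprod_self_nonneg[of "C *\<^sub>v y"] by linarith
  have X2: "\<mu> * b1 * cc^2 + b2 * aa^2 - b3 * aa * cc \<le> X"
  proof -
    have "b2 * aa^2 - b3 * aa * cc \<le> (C *\<^sub>v y) \<bullet> (C *\<^sub>v y)"
      using CyCy Cp_low cross sprod_self_nonneg[of "C *\<^sub>v w"] unfolding aa2 by linarith
    thus ?thesis unfolding X_def using muM by linarith
  qed
  have "lam_bar' b1 b2 b3 \<mu> / 2 * (aa^2 + cc^2) \<le> X" by (rule lam2d(2)[OF b1 b2 b3 mu aa0 cc0 X1 X2])
  thus ?thesis unfolding X_def aa2 cc2 yy .
qed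

theorem lemma2:
  fixes n T :: nat and es :: "(nat \<times> nat) list" and Cs :: "real mat list"
    and x :: "real vec" and S b1 b2 b3 \<mu> :: real
  defines "D \<equiv> incidence T es"
  defines "L \<equiv> transpose_mat D * D"
  defines "M \<equiv> kron D (1\<^sub>m n)"
  defines "C \<equiv> blockdiag Cs"
  defines "OtO \<equiv> foldr (\<lambda>A acc. transpose_mat A * A + acc) Cs (0\<^sub>m n n)"
  assumes "n \<ge> 1" and "T \<ge> 2"
    and "connected_graph T es"
    and "length Cs = T" and "\<forall>A\<in>set Cs. dim_col A = n"
    and "lam_min OtO > 0"
    and "x \<in> carrier_vec (n * T)"
    and "(vnorm (M *\<^sub>v x))^2 \<le> S"
    and "b1 > 0" and "b2 > 0" and "b3 > 0"
    and "eig_desc L (T - 1) \<ge> b1"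
    and "lam_min OtO / T \<ge> b2"
    and "2 * spec_norm C * sqrt (lam_max OtO) / sqrt T \<le> b3"
    and "\<mu> > 0"
  shows "2 * \<mu>^2 * (vnorm (minv (\<mu> \<cdot>\<^sub>m (transpose_mat M * M) + transpose_mat C * C)
            *\<^sub>v ((transpose_mat M * M) *\<^sub>v x)))^2
         \<le> 4 * \<mu> / max (lam_bar' b1 b2 b3 \<mu>) (lam_min (transpose_mat C * C)) * S"
proof -
  note asm = assms(6-)
  define N where "N = n * T"
  have Npos: "0 < N" unfolding N_def using asm(1,2) by simp
  have D: "D \<in> carrier_mat (length es) T" unfolding D_def by simp
  have M0: "M \<in> carrier_mat (length es * n) (T * n)" unfolding M_def by (rule kron_carrier[OF D])
  hence M: "M \<in> carrier_mat (length es * n) N" unfolding N_def by (simp add: mult.commute)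
  from blockdiag_props[OF asm(5)] asm(4)
  have C: "C \<in> carrier_mat (sum_list (map dim_row Cs)) N" unfolding C_def N_def by auto
  define P where "P = \<mu> \<cdot>\<^sub>m (transpose_mat M * M) + transpose_mat C * C"
  define CC where "CC = transpose_mat C * C"
  define lam where "lam = max (lam_bar' b1 b2 b3 \<mu>) (lam_min CC)"
  have P: "P \<in> carrier_mat N N" unfolding P_def using M C by simp
  have CCc: "CC \<in> carrier_mat N N" unfolding CC_def using C by simp
  have sCC: "transpose_mat CC = CC" unfolding CC_def by (rule gram_sym)
  have lbpos: "lam_bar' b1 b2 b3 \<mu> > 0"
    by (rule lam2d(1)[OF asm(9,10,11,15), of 0 0 0]) auto
  have lampos: "lam > 0" unfolding lam_def using lbpos by simp
  have qP: "y \<bullet> (P *\<^sub>v y) = \<mu> * ((M *\<^sub>v y) \<bullet> (M *\<^sub>v y)) + (C *\<^sub>v y) \<bullet> (C *\<^sub>v y)"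
    if y: "y \<in> carrier_vec N" for y
    unfolding P_def by (rule quadP[OF M C y])
  have lowP: "lam / 2 * (y \<bullet> y) \<le> y \<bullet> (P *\<^sub>v y)" if y: "y \<in> carrier_vec N" for y
  proof -
    have MM: "0 \<le> \<mu> * ((M *\<^sub>v y) \<bullet> (M *\<^sub>v y))" using asm(15) sprod_self_nonneg[of "M *\<^sub>v y"] by simp
    have 1: "lam_bar' b1 b2 b3 \<mu> / 2 * (y \<bullet> y) \<le> y \<bullet> (P *\<^sub>v y)"
      unfolding qP[OF y] using decomp[OF asm(1-5) asm(6)[unfolded OtO_def] y[unfolded N_def] asm(9-11)
        asm(12)[unfolded L_def D_def] asm(13)[unfolded OtO_def] asm(14)[unfolded C_def OtO_def] asm(15)]
      unfolding M_def C_def D_def by simp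
    have "lam_min CC * (y \<bullet> y) \<le> y \<bullet> (CC *\<^sub>v y)" by (rule lam_min_rayleigh[OF CCc sCC Npos y])
    also have "\<dots> = (C *\<^sub>v y) \<bullet> (C *\<^sub>v y)" unfolding CC_def by (rule gram_quad[OF C y])
    finally have 2: "lam_min CC * (y \<bullet> y) \<le> y \<bullet> (P *\<^sub>v y)" unfolding qP[OF y] using MM by linarith
    show ?thesis
    proof (cases "lam_bar' b1 b2 b3 \<mu> \<le> lam_min CC")
      case True
      hence "lam = lam_min CC" unfolding lam_def by simp
      moreover have "lam / 2 * (y \<bullet> y) \<le> lam * (y \<bullet> y)"
        using lampos sprod_self_nonneg[of y] by (intro mult_right_mono) auto
      ultimately show ?thesis using 2 by simp
    next
      case False
      hence "lam = lam_bar' b1 b2 b3 \<mu>" unfolding lam_def by simp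
      thus ?thesis using 1 by simp
    qed
  qed
  have injP: "v = 0\<^sub>v N" if v: "v \<in> carrier_vec N" "P *\<^sub>v v = 0\<^sub>v N" for v
  proof -
    have "lam / 2 * (v \<bullet> v) \<le> 0" using lowP[OF v(1)] v by simp
    hence "v \<bullet> v \<le> 0" using lampos by (simp add: mult_le_0_iff)
    hence "v \<bullet> v = 0" using sprod_self_nonneg[of v] by linarith
    thus ?thesis using sprod_self_eq0[OF v(1)] by simp
  qed
  obtain B where B: "B \<in> carrier_mat N N" "B * P = 1\<^sub>m N" "P * B = 1\<^sub>m N"
    using inj_inverse[OF P injP] by blast
  note mi = minv_props[OF P B]
  define g where "g = (transpose_mat M * M) *\<^sub>v x"
  have xN: "x \<in> carrier_vec N" using asm(7) unfolding N_def .
  have gc: "g \<in> carrier_vec N" unfolding g_def using M xN by simp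
  define z where "z = minv P *\<^sub>v g"
  have zc: "z \<in> carrier_vec N" unfolding z_def using mi(1) gc by simp
  have Pz: "P *\<^sub>v z = g" unfolding z_def
    using mi P gc by (simp add: assoc_mult_mat_vec[symmetric, of P N N "minv P" N g])
  have Mx: "M *\<^sub>v x \<in> carrier_vec (length es * n)" using M xN by simp
  have Mz: "M *\<^sub>v z \<in> carrier_vec (length es * n)" using M zc by simp
  define Q where "Q = z \<bullet> (P *\<^sub>v z)"
  have Qe: "Q = (M *\<^sub>v z) \<bullet> (M *\<^sub>v x)"
  proof -
    have "Q = z \<bullet> (transpose_mat M *\<^sub>v (M *\<^sub>v x))" unfolding Q_def Pz g_def
      using M xN by (simp add: assoc_mult_mat_vec[of _ N "length es * n" _ N])
    also have "\<dots> = (transpose_mat M *\<^sub>v (M *\<^sub>v x)) \<bullet> z"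
      by (rule comm_scalar_prod[of _ N], insert M xN zc, auto)
    also have "\<dots> = (M *\<^sub>v x) \<bullet> (M *\<^sub>v z)" by (rule transpose_vec_mult_scalar[OF M zc Mx])
    also have "\<dots> = (M *\<^sub>v z) \<bullet> (M *\<^sub>v x)" by (rule comm_scalar_prod[OF Mx Mz])
    finally show ?thesis .
  qed
  define AA where "AA = (M *\<^sub>v z) \<bullet> (M *\<^sub>v z)"
  define BB where "BB = (M *\<^sub>v x) \<bullet> (M *\<^sub>v x)"
  have AA0: "AA \<ge> 0" and BB0: "BB \<ge> 0" unfolding AA_def BB_def by (simp_all add: sprod_self_nonneg)
  have muA: "\<mu> * AA \<le> Q" unfolding Q_def qP[OF zc] AA_def using sprod_self_nonneg[of "C *\<^sub>v z"] by simp
  have cs: "Q^2 \<le> AA * BB" unfolding Qe AA_def BB_def by (rule vec_cs[OF Mz Mx])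
  have QB: "Q \<le> BB / \<mu>"
  proof (cases "Q > 0")
    case True
    have "Q^2 \<le> AA * BB" by (rule cs)
    also have "\<dots> \<le> (Q / \<mu>) * BB" using muA asm(15) BB0 by (intro mult_right_mono) (auto simp: field_simps)
    finally have "Q * Q \<le> Q * (BB / \<mu>)" by (simp add: power2_eq_square)
    thus ?thesis using True by (simp only: mult_le_cancel_left_pos)
  next
    case False
    thus ?thesis using BB0 asm(15) by (smt (verit) divide_nonneg_pos)
  qed
  have BS: "BB \<le> S" using asm(8) unfolding BB_def vnorm_sq .
  have "lam / 2 * (z \<bullet> z) \<le> Q" unfolding Q_def by (rule lowP[OF zc])
  also have "\<dots> \<le> S / \<mu>" using QB BS asm(15) by (smt (verit) divide_right_mono)
  finally have zz: "z \<bullet> z \<le> 2 * S / (\<mu> * lam)" using lampos asm(15) by (simp add: field_simps)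
  have "2 * \<mu>^2 * (vnorm z)^2 = 2 * \<mu>^2 * (z \<bullet> z)" by (simp add: vnorm_sq)
  also have "\<dots> \<le> 2 * \<mu>^2 * (2 * S / (\<mu> * lam))" using zz asm(15) by (intro mult_left_mono) auto
  also have "\<dots> = 4 * \<mu> / lam * S" using asm(15) lampos by (simp add: field_simps power2_eq_square)
  finally show ?thesis unfolding z_def g_def P_def lam_def CC_def .
qed

end
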